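(* Let $m\ge1$, $\tau\ge0$, $C=C([-\tau,0],\mathbb{R}^m)$ with the maximum norm and positive cone $C_+=C([-\tau,0],\mathbb{R}^m_+)$. Let $F,V$ be bounded linear operators from $C$ to $\mathbb{R}^m$ such that (A1) $F(C_+)\subset\mathbb{R}^m_+$; and (A2) $-V=(-V_1,\dots,-V_m)$ satisfies the quasimonotone condition: for each $i$, $-V_i(\phi)\ge0$ whenever $\phi\in C_+$ and $\phi_i(0)=0$; and $s(-V)<0$. Let $\mathcal{R}_0=r(\hat{F}\hat{V}^{-1})$ and $\lambda^*=s(F-V)$. Then $\mathcal{R}_0-1$ and $\lambda^*$ have the same sign.
   Context: For $x\in\mathbb{R}^m$, $\hat{x}\in C$ is the constant function equal to $x$; for a bounded linear $L:C\to\mathbb{R}^m$, $\hat{L}$ is the $m\times m$ matrix $\hat{L}x=L(\hat{x})$. $r(\cdot)$ denotes spectral radius. For bounded linear $L:C\to\mathbb{R}^m$, $s(L)$ is the stability modulus of the FDE $\frac{du(t)}{dt}=L(u_t)$ (with $u_t(\theta)=u(t+\theta)$), i.e. the maximum of real parts of its eigenvalues (those $\lambda\in\mathbb{C}$ for which it has a nonzero solution $e^{\lambda t}v$); thus $s(-V)$ refers to $\frac{du}{dt}=-V(u_t)$ and $s(F-V)$ to $\frac{du}{dt}=F(u_t)-V(u_t)$. "Same sign" means equal values of the sign function. *)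

theory Defs
  imports "HOL-Analysis.Analysis"
begin

text \<open>The phase space C = C([-tau,0], R^m) is represented by functions
  real => real^'m that are continuous on {-tau..0}; operators C -> R^m are
  functions (real => real^'m) => real^'m, constrained only on that set.\<close>

definition in_C :: "real \<Rightarrow> (real \<Rightarrow> real^'m) \<Rightarrow> bool" where
  "in_C \<tau> \<phi> \<longleftrightarrow> continuous_on {-\<tau>..0} \<phi>"

definition in_Cplus :: "real \<Rightarrow> (real \<Rightarrow> real^'m) \<Rightarrow> bool" where
  "in_Cplus \<tau> \<phi> \<longleftrightarrow> in_C \<tau> \<phi> \<and> (\<forall>\<theta>\<in>{-\<tau>..0}. \<forall>i. 0 \<le> \<phi> \<theta> $ i)"

definition bounded_linear_C :: "real \<Rightarrow> ((real \<Rightarrow> real^'m) \<Rightarrow> real^'m) \<Rightarrow> bool" where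
  "bounded_linear_C \<tau> L \<longleftrightarrow>
     (\<forall>\<phi> \<psi>. in_C \<tau> \<phi> \<longrightarrow> in_C \<tau> \<psi> \<longrightarrow> L (\<lambda>\<theta>. \<phi> \<theta> + \<psi> \<theta>) = L \<phi> + L \<psi>) \<and>
     (\<forall>c \<phi>. in_C \<tau> \<phi> \<longrightarrow> L (\<lambda>\<theta>. c *\<^sub>R \<phi> \<theta>) = c *\<^sub>R L \<phi>) \<and>
     (\<exists>K. \<forall>\<phi>. in_C \<tau> \<phi> \<longrightarrow> norm (L \<phi>) \<le> K * (SUP \<theta>\<in>{-\<tau>..0}. norm (\<phi> \<theta>)))"

definition cplx_app :: "((real \<Rightarrow> real^'m) \<Rightarrow> real^'m) \<Rightarrow> (real \<Rightarrow> complex^'m) \<Rightarrow> complex^'m" where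
  "cplx_app L \<phi> = (\<chi> i. Complex (L (\<lambda>\<theta>. \<chi> j. Re (\<phi> \<theta> $ j)) $ i) (L (\<lambda>\<theta>. \<chi> j. Im (\<phi> \<theta> $ j)) $ i))"

text \<open>lambda is an eigenvalue of du/dt = L(u_t): there is a nonzero solution
  u(t) = e^{lambda t} v, where u_t(theta) = u(t+theta).\<close>
definition fde_eigenvalue :: "((real \<Rightarrow> real^'m) \<Rightarrow> real^'m) \<Rightarrow> complex \<Rightarrow> bool" where
  "fde_eigenvalue L z \<longleftrightarrow> (\<exists>v::complex^'m. v \<noteq> 0 \<and>
     (\<forall>t::real. ((\<lambda>s. exp (z * of_real s) *s v) has_vector_derivative
         cplx_app L (\<lambda>\<theta>. exp (z * of_real (t + \<theta>)) *s v)) (at t)))"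

definition stab_mod :: "((real \<Rightarrow> real^'m) \<Rightarrow> real^'m) \<Rightarrow> real" where
  "stab_mod L = Sup (Re ` {z. fde_eigenvalue L z})"

definition hatmat :: "((real \<Rightarrow> real^'m) \<Rightarrow> real^'m) \<Rightarrow> real^'m^'m" where
  "hatmat L = matrix (\<lambda>x. L (\<lambda>\<theta>. x))"

definition spec_radius :: "real^'n^'n \<Rightarrow> real" where
  "spec_radius A = Sup {cmod \<mu> | \<mu>. \<exists>v::complex^'n. v \<noteq> 0 \<and>
      (\<chi> i j. complex_of_real (A $ i $ j)) *v v = \<mu> *s v}"

end

theory Submission
  imports Defs
begin

definition Sg :: "(real^'m) set" where
  "Sg = {u. (\<forall>i. 0 \<le> u$i) \<and> sum (\<lambda>i. u$i) UNIV = 1}"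

definition SS :: "(real \<Rightarrow> real^'m^'m) \<Rightarrow> real set" where
  "SS M = {\<mu>. \<exists>u\<in>Sg. \<forall>i. \<mu> * u$i \<le> (M \<mu> *v u)$i}"

lemma mv_nth: "(A *v u)$i = (\<Sum>j\<in>UNIV. A$i$j * u$j)"
  by (simp add: matrix_vector_mult_def)

lemma Sg_pos: assumes "u \<in> Sg" shows "\<exists>k. 0 < u$k"
proof (rule ccontr)
  assume "\<not> ?thesis"
  hence "\<forall>k. u$k \<le> 0" by (simp add: not_less)
  hence "\<forall>k. u$k = 0" using assms by (simp add: Sg_def order_antisym)
  thus False using assms by (simp add: Sg_def)
qed

lemma Sg_bounded: "bounded (Sg :: (real^'m) set)"
proof -
  have "\<forall>u\<in>(Sg :: (real^'m) set). norm u \<le> 1"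
  proof
    fix u :: "real^'m" assume u: "u \<in> Sg"
    have "norm u \<le> (\<Sum>i\<in>UNIV. \<bar>u$i\<bar>)" by (rule norm_le_l1_cart)
    also have "\<dots> = (\<Sum>i\<in>UNIV. u$i)" using u by (simp add: Sg_def)
    also have "\<dots> = 1" using u by (simp add: Sg_def)
    finally show "norm u \<le> 1" .
  qed
  thus ?thesis unfolding bounded_iff by blast
qed

lemma Sg_closed: "closed (Sg :: (real^'m) set)"
proof -
  have "Sg = (\<Inter>i. {u::real^'m. 0 \<le> u$i}) \<inter> {u. (\<Sum>i\<in>UNIV. u$i) = 1}"
    by (auto simp: Sg_def)
  moreover have "closed {u::real^'m. (\<Sum>i\<in>UNIV. u$i) = 1}"
    by (intro closed_Collect_eq continuous_intros)
  moreover have "closed (\<Inter>i. {u::real^'m. 0 \<le> u$i})"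
    by (intro closed_INT ballI closed_halfspace_component_ge_cart)
  ultimately show ?thesis by (metis closed_Int)
qed

lemma mv_mono:
  fixes A B :: "real^'n^'n"
  assumes "\<forall>i j. A$i$j \<le> B$i$j" "\<forall>j. 0 \<le> u$j"
  shows "(A *v u)$i \<le> (B *v u)$i"
proof -
  have "\<forall>j. A$i$j * u$j \<le> B$i$j * u$j" using assms by (simp add: mult_right_mono)
  then show ?thesis by (simp add: mv_nth sum_mono)
qed

lemma metz_zero:
  fixes A :: "real^'n^'n"
  assumes "\<forall>i j. i \<noteq> j \<longrightarrow> 0 \<le> A$i$j" "\<forall>j. 0 \<le> u$j" "u$k = 0"
  shows "0 \<le> (A *v u)$k"
proof -
  have "0 \<le> A$k$j * u$j" for j using assms by (cases "j = k") auto
  then show ?thesis by (simp add: mv_nth sum_nonneg)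
qed

lemma SS_down:
  assumes anti: "\<And>\<mu> \<mu>' i j. \<mu> \<le> \<mu>' \<Longrightarrow> M \<mu>' $i$j \<le> M \<mu> $i$j"
    and "\<mu> \<in> SS M" "\<mu>' \<le> \<mu>"
  shows "\<mu>' \<in> SS M"
proof -
  obtain u where u: "u \<in> Sg" "\<forall>i. \<mu> * u$i \<le> (M \<mu> *v u)$i" using assms(2) by (auto simp: SS_def)
  have "\<forall>i. \<mu>' * u$i \<le> (M \<mu>' *v u)$i"
  proof
    fix i
    have "\<mu>' * u$i \<le> \<mu> * u$i" using u(1) assms(3) by (auto simp: Sg_def intro: mult_right_mono)
    also have "\<dots> \<le> (M \<mu> *v u)$i" using u by auto
    also have "\<dots> \<le> (M \<mu>' *v u)$i" using u(1) anti[OF assms(3)] by (intro mv_mono) (auto simp: Sg_def)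
    finally show "\<mu>' * u$i \<le> (M \<mu>' *v u)$i" .
  qed
  thus ?thesis using u(1) by (auto simp: SS_def)
qed

lemma bump:
  assumes metz: "\<And>\<mu> i j. i \<noteq> j \<Longrightarrow> 0 \<le> M \<mu> $i$j"
    and cont: "\<And>i j. continuous_on UNIV (\<lambda>\<mu>. M \<mu> $i$j)"
    and u: "u \<in> Sg" and ineq: "\<forall>i. \<rho> * u$i \<le> (M \<mu>0 *v u)$i" and rho: "\<rho> > \<mu>0"
  shows "\<exists>\<mu>>\<mu>0. \<mu> \<in> SS M"
proof -
  have "\<forall>\<^sub>F \<mu> in at_right \<mu>0. \<mu> * u$i \<le> (M \<mu> *v u)$i" for i
  proof (cases "u$i = 0")
    case True
    have "0 \<le> (M \<mu> *v u)$i" for \<mu>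
    proof (rule metz_zero)
      show "\<forall>i j. i \<noteq> j \<longrightarrow> 0 \<le> M \<mu> $ i $ j" using metz by blast
      show "\<forall>j. 0 \<le> u $ j" using u by (simp add: Sg_def)
      show "u $ i = 0" by (rule True)
    qed
    then show ?thesis using True by simp
  next
    case False
    hence ui: "u$i > 0" using u by (auto simp: Sg_def less_le)
    let ?f = "\<lambda>\<mu>. (\<Sum>j\<in>UNIV. M \<mu> $i$j * u$j) - \<mu> * u$i"
    have "continuous_on UNIV ?f" by (intro continuous_intros cont)
    hence "isCont ?f \<mu>0" by (simp add: continuous_on_eq_continuous_at)
    hence lim: "(?f \<longlongrightarrow> ?f \<mu>0) (at_right \<mu>0)"
      by (simp add: isCont_def filterlim_at_split)
    have "?f \<mu>0 \<ge> (\<rho> - \<mu>0) * u$i" using ineq[rule_format, of i] by (simp add: mv_nth algebra_simps)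
    moreover have "(\<rho> - \<mu>0) * u$i > 0" using rho ui by simp
    ultimately have "?f \<mu>0 > 0" by linarith
    from order_tendstoD(1)[OF lim this] show ?thesis
      by eventually_elim (simp add: mv_nth)
  qed
  hence "\<forall>\<^sub>F \<mu> in at_right \<mu>0. \<forall>i. \<mu> * u$i \<le> (M \<mu> *v u)$i"
    by (rule eventually_all_finite)
  moreover have "\<forall>\<^sub>F \<mu> in at_right \<mu>0. \<mu>0 < \<mu>" by (rule eventually_at_right_less)
  ultimately have "\<forall>\<^sub>F \<mu> in at_right \<mu>0. \<mu>0 < \<mu> \<and> (\<forall>i. \<mu> * u$i \<le> (M \<mu> *v u)$i)"
    by eventually_elim auto
  from frequently_ex[OF eventually_frequently[OF trivial_limit_at_right_real this]]
  obtain \<mu> where "\<mu>0 < \<mu>" "\<forall>i. \<mu> * u$i \<le> (M \<mu> *v u)$i" by blast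
  thus ?thesis using u by (auto simp: SS_def)
qed


lemma diag_le:
  fixes A :: "real^'n^'n"
  assumes "\<forall>i j. i \<noteq> j \<longrightarrow> 0 \<le> A$i$j" "\<forall>j. 0 \<le> u$j"
  shows "A$i$i * u$i \<le> (A *v u)$i"
proof -
  have "(A *v u)$i = A$i$i * u$i + (\<Sum>j\<in>UNIV-{i}. A$i$j * u$j)"
    unfolding mv_nth by (simp add: sum.remove)
  moreover have "0 \<le> (\<Sum>j\<in>UNIV-{i}. A$i$j * u$j)" using assms by (intro sum_nonneg) auto
  ultimately show ?thesis by linarith
qed

lemma gen_max:
  fixes M :: "real \<Rightarrow> real^'m^'m"
  assumes cont: "\<And>i j. continuous_on UNIV (\<lambda>\<mu>. M \<mu> $i$j)"
    and bdd: "\<And>\<mu>. \<mu> \<in> SS M \<Longrightarrow> \<mu> \<le> b" and ne: "m0 \<in> SS M"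
  shows "\<exists>l0. l0 \<in> SS M \<and> (\<forall>\<mu>\<in>SS M. \<mu> \<le> l0)"
proof -
  define T where "T = (Sigma {m0..b} (\<lambda>_. Sg)) \<inter> (\<Inter>i. {p::real \<times> (real^'m). fst p * snd p $ i \<le> (\<Sum>j\<in>UNIV. M (fst p) $i$j * snd p $ j)})"
  have "closed {p::real \<times> (real^'m). fst p * snd p $ i \<le> (\<Sum>j\<in>UNIV. M (fst p) $i$j * snd p $ j)}" for i
  proof (rule closed_Collect_le)
    show "continuous_on UNIV (\<lambda>p::real \<times> (real^'m). fst p * snd p $ i)" by (intro continuous_intros)
    show "continuous_on UNIV (\<lambda>p::real \<times> (real^'m). (\<Sum>j\<in>UNIV. M (fst p) $i$j * snd p $ j))"
      by (intro continuous_intros continuous_on_compose2[OF cont continuous_on_fst]) auto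
  qed
  hence "closed T" unfolding T_def
    by (intro closed_Int closed_Times closed_INT ballI Sg_closed) auto
  moreover have "bounded T" unfolding T_def
    by (rule bounded_subset[of "Sigma {m0..b} (\<lambda>_. Sg)"]) (auto intro: bounded_Times Sg_bounded)
  ultimately have "compact T" by (simp add: compact_eq_bounded_closed)
  hence cT: "compact (fst ` T)" by (intro compact_continuous_image continuous_intros)
  obtain u0 where u0: "u0 \<in> Sg" "\<forall>i. m0 * u0$i \<le> (M m0 *v u0)$i" using ne by (auto simp: SS_def)
  have memT: "(\<mu>, u) \<in> T" if "\<mu> \<in> {m0..b}" "u \<in> Sg" "\<forall>i. \<mu> * u$i \<le> (M \<mu> *v u)$i" for \<mu> u
    using that by (auto simp: T_def mv_nth)
  have "(m0, u0) \<in> T" using u0 bdd[OF ne] by (intro memT) auto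
  hence "fst ` T \<noteq> {}" by force
  then obtain s where s: "s \<in> fst ` T" "\<forall>t\<in>fst ` T. t \<le> s"
    using compact_attains_sup[OF cT] by blast
  have "s \<in> SS M" using s(1) by (auto simp: T_def SS_def mv_nth; blast)
  moreover have "\<mu> \<le> s" if mu: "\<mu> \<in> SS M" for \<mu>
  proof (cases "\<mu> < m0")
    case True
    have "m0 \<le> s" using s(2) \<open>(m0, u0) \<in> T\<close> by force
    then show ?thesis using True by simp
  next
    case False
    obtain u where u: "u \<in> Sg" "\<forall>i. \<mu> * u$i \<le> (M \<mu> *v u)$i" using mu unfolding SS_def by blast
    have "(\<mu>, u) \<in> T" using False bdd[OF mu] u by (intro memT) auto
    then show ?thesis using s(2) by force
  qed
  ultimately show ?thesis by blast
qed


lemma gen_eig: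
  fixes M :: "real \<Rightarrow> real^'m^'m"
  assumes metz: "\<And>\<mu> i j. i \<noteq> j \<Longrightarrow> 0 \<le> M \<mu> $i$j"
    and cont: "\<And>i j. continuous_on UNIV (\<lambda>\<mu>. M \<mu> $i$j)"
    and l0: "l0 \<in> SS M" and mx: "\<forall>\<mu>\<in>SS M. \<mu> \<le> l0"
  shows "\<exists>u\<in>Sg. M l0 *v u = l0 *\<^sub>R u"
proof -
  define A where "A = M l0"
  have metzA: "\<forall>i j. i \<noteq> j \<longrightarrow> 0 \<le> A$i$j" using metz by (simp add: A_def)
  define c where "c = \<bar>l0\<bar> + 1 + (\<Sum>i\<in>UNIV. \<bar>A$i$i\<bar>)"
  have cdiag: "0 \<le> A$i$i + c" for i
  proof -
    have "\<bar>A$i$i\<bar> \<le> (\<Sum>i\<in>UNIV. \<bar>A$i$i\<bar>)"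
      by (rule member_le_sum) auto
    thus ?thesis unfolding c_def by linarith
  qed
  have lc: "0 < l0 + c" unfolding c_def
    using sum_nonneg[of UNIV "\<lambda>i. \<bar>A$i$i\<bar>"] by linarith
  define P where "P u = A *v u + c *\<^sub>R u" for u :: "real^'m"
  have Pnn: "0 \<le> P u $ i" if "\<forall>j. 0 \<le> u$j" for u i
  proof -
    have "A$i$i * u$i \<le> (A *v u)$i" using diag_le[OF metzA that] .
    moreover have "0 \<le> (A$i$i + c) * u$i" using cdiag that by simp
    ultimately show ?thesis by (simp add: P_def algebra_simps)
  qed
  define K where "K = {u\<in>Sg. \<forall>i. l0 * u$i \<le> (A *v u)$i}"
  define \<sigma> where "\<sigma> u = (\<Sum>i\<in>UNIV. P u $ i)" for u
  have PK: "(l0 + c) * u$i \<le> P u $ i" if "u \<in> K" for u i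
    using that by (auto simp: K_def P_def algebra_simps)
  have sK: "\<sigma> u \<ge> l0 + c" if "u \<in> K" for u
  proof -
    have "(\<Sum>i\<in>UNIV. (l0 + c) * u$i) \<le> \<sigma> u" unfolding \<sigma>_def using PK[OF that] by (intro sum_mono) auto
    moreover have "(\<Sum>i\<in>UNIV. (l0 + c) * u$i) = l0 + c" using that
      by (simp add: K_def Sg_def sum_distrib_left[symmetric])
    ultimately show ?thesis by simp
  qed
  define T where "T u = (1 / \<sigma> u) *\<^sub>R P u" for u
  have Plin: "A *v P u - l0 *\<^sub>R P u = P (P u - (l0 + c) *\<^sub>R u)" for u
    by (simp add: P_def matrix_vector_right_distrib matrix_vector_mult_diff_distrib
        matrix_vector_mult_scaleR algebra_simps)
  have TK: "T u \<in> K" if uK: "u \<in> K" for u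
  proof -
    have sp: "\<sigma> u > 0" using sK[OF uK] lc by linarith
    have unn: "\<forall>j. 0 \<le> u$j" using uK by (simp add: K_def Sg_def)
    have Pu: "\<forall>j. 0 \<le> P u $ j" using Pnn[OF unn] by blast
    have "T u \<in> Sg"
    proof -
      have "(\<Sum>i\<in>UNIV. T u $ i) = (1 / \<sigma> u) * \<sigma> u"
        by (simp add: T_def \<sigma>_def sum_distrib_left)
      also have "\<dots> = 1" using sp by simp
      finally show ?thesis using Pu sp by (auto simp: Sg_def T_def)
    qed
    moreover have "l0 * T u $ i \<le> (A *v T u) $ i" for i
    proof -
      have d: "\<forall>j. 0 \<le> (P u - (l0 + c) *\<^sub>R u) $ j" using PK[OF uK] by simp
      have "0 \<le> P (P u - (l0 + c) *\<^sub>R u) $ i" using Pnn[OF d] .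
      moreover have "(A *v P u)$i - l0 * P u $ i = P (P u - (l0 + c) *\<^sub>R u) $ i"
        using arg_cong[OF Plin[of u], of "\<lambda>v. v$i"] by simp
      ultimately have "l0 * P u $ i \<le> (A *v P u) $ i" by linarith
      hence "(1 / \<sigma> u) * (l0 * P u $ i) \<le> (1 / \<sigma> u) * (A *v P u) $ i"
        using sp by (intro mult_left_mono) auto
      thus ?thesis by (simp add: T_def matrix_vector_mult_scaleR algebra_simps)
    qed
    ultimately show ?thesis by (simp add: K_def)
  qed
  have Kc: "compact K"
  proof -
    have Keq: "K = Sg \<inter> (\<Inter>i. {u. l0 * u$i \<le> (\<Sum>j\<in>UNIV. A$i$j * u$j)})"
      by (auto simp: K_def mv_nth)
    have cl: "closed {u::real^'m. l0 * u$i \<le> (\<Sum>j\<in>UNIV. A$i$j * u$j)}" for i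
      by (intro closed_Collect_le continuous_intros)
    have "closed (\<Inter>i. {u::real^'m. l0 * u$i \<le> (\<Sum>j\<in>UNIV. A$i$j * u$j)})"
      by (rule closed_INT) (simp add: cl)
    hence "closed K" unfolding Keq by (intro closed_Int Sg_closed)
    moreover have "bounded K" by (rule bounded_subset[OF Sg_bounded]) (auto simp: K_def)
    ultimately show ?thesis by (simp add: compact_eq_bounded_closed)
  qed
  have Kconv: "convex K"
  proof (rule convexI)
    fix x y :: "real^'m" and a b :: real
    assume xy: "x \<in> K" "y \<in> K" and ab0: "0 \<le> a" "0 \<le> b" "a + b = 1"
    hence ab: "0 \<le> a \<and> 0 \<le> b \<and> a + b = 1" by simp
    have xs: "x \<in> Sg" "y \<in> Sg" using xy by (auto simp: K_def)
    have "(\<Sum>i\<in>UNIV. (a *\<^sub>R x + b *\<^sub>R y)$i) = a * (\<Sum>i\<in>UNIV. x$i) + b * (\<Sum>i\<in>UNIV. y$i)"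
      by (simp add: sum.distrib sum_distrib_left)
    also have "\<dots> = 1" using xs ab by (simp add: Sg_def)
    finally have "a *\<^sub>R x + b *\<^sub>R y \<in> Sg" using xs ab by (simp add: Sg_def)
    moreover have "l0 * (a *\<^sub>R x + b *\<^sub>R y)$i \<le> (A *v (a *\<^sub>R x + b *\<^sub>R y))$i" for i
    proof -
      have "a * (l0 * x$i) \<le> a * (A *v x)$i" "b * (l0 * y$i) \<le> b * (A *v y)$i"
        using xy ab by (auto simp: K_def intro: mult_left_mono)
      thus ?thesis by (simp add: matrix_vector_right_distrib matrix_vector_mult_scaleR algebra_simps)
    qed
    ultimately show "a *\<^sub>R x + b *\<^sub>R y \<in> K" by (simp add: K_def)
  qed
  have Kne: "K \<noteq> {}" using l0 by (auto simp: SS_def K_def A_def)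
  have Tcont: "continuous_on K T"
  proof -
    have cP: "continuous_on K P" unfolding P_def
      by (intro continuous_intros linear_continuous_on matrix_vector_mul_bounded_linear)
    have "continuous_on K \<sigma>" unfolding \<sigma>_def
      by (intro continuous_intros continuous_on_compose2[OF _ cP, of UNIV]) (auto intro: linear_continuous_on bounded_linear_vec_nth)
    moreover have "\<forall>u\<in>K. \<sigma> u \<noteq> 0" using sK lc by force
    ultimately show ?thesis unfolding T_def
      by (intro continuous_intros cP) auto
  qed
  obtain u where uK: "u \<in> K" and fx: "T u = u"
    using brouwer[OF Kc Kconv Kne Tcont] TK by blast
  have sp: "\<sigma> u > 0" using sK[OF uK] lc by linarith
  have "P u = \<sigma> u *\<^sub>R T u" using sp by (simp add: T_def)
  hence "P u = \<sigma> u *\<^sub>R u" using fx by simp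
  hence eig: "A *v u = (\<sigma> u - c) *\<^sub>R u" unfolding P_def by (simp add: algebra_simps)
  have uS: "u \<in> Sg" using uK by (simp add: K_def)
  obtain k where k: "0 < u$k" using Sg_pos[OF uS] by blast
  have "l0 * u$k \<le> (A *v u)$k" using uK by (simp add: K_def)
  moreover have "(A *v u)$k = (\<sigma> u - c) * u$k" using eig by simp
  ultimately have "l0 * u$k \<le> (\<sigma> u - c) * u$k" by simp
  hence ge: "l0 \<le> \<sigma> u - c" using k by simp
  have "\<not> (\<sigma> u - c > l0)"
  proof
    assume gt: "\<sigma> u - c > l0"
    have "\<forall>i. (\<sigma> u - c) * u$i \<le> (M l0 *v u)$i" using eig by (simp add: A_def)
    from bump[OF metz cont uS this gt] mx show False by force
  qed
  hence "\<sigma> u - c = l0" using ge by simp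
  thus ?thesis using eig uS by (auto simp: A_def)
qed

definition nonneg :: "real^'m \<Rightarrow> bool" where "nonneg x \<longleftrightarrow> (\<forall>i. 0 \<le> x$i)"

definition HypW :: "real^'m^'m \<Rightarrow> bool" where
  "HypW W \<longleftrightarrow> (\<forall>i j. i \<noteq> j \<longrightarrow> W$i$j \<le> 0) \<and> (\<forall>u\<in>Sg. \<exists>k. 0 < (W *v u)$k)"

lemma mv_axis: "((A::real^'m^'m) *v axis k 1)$i = A$i$k"
  by (simp add: matrix_vector_mult_basis column_def)

lemma sum_pos_nonneg:
  assumes "nonneg (x::real^'m)" "x \<noteq> 0"
  shows "0 < (\<Sum>i\<in>UNIV. x$i)"
proof -
  obtain k where "x$k \<noteq> 0" using assms(2) by (auto simp: vec_eq_iff)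
  hence k: "0 < x$k" using assms(1) by (auto simp: nonneg_def less_le)
  have "x$k \<le> (\<Sum>i\<in>UNIV. x$i)" using assms(1) by (intro member_le_sum) (auto simp: nonneg_def)
  thus ?thesis using k by linarith
qed

lemma normalize_Sg:
  assumes "nonneg (x::real^'m)" "x \<noteq> 0"
  shows "(1 / (\<Sum>i\<in>UNIV. x$i)) *\<^sub>R x \<in> Sg"
proof -
  have s: "0 < (\<Sum>i\<in>UNIV. x$i)" by (rule sum_pos_nonneg[OF assms])
  have "(\<Sum>i\<in>UNIV. ((1 / (\<Sum>i\<in>UNIV. x$i)) *\<^sub>R x)$i) = (1 / (\<Sum>i\<in>UNIV. x$i)) * (\<Sum>i\<in>UNIV. x$i)"
    by (simp add: sum_distrib_left)
  also have "\<dots> = 1" using s by simp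
  finally show ?thesis using assms(1) s by (simp add: Sg_def nonneg_def)
qed

lemma Sg_nonneg: "u \<in> Sg \<Longrightarrow> nonneg u" by (simp add: Sg_def nonneg_def)
lemma Sg_nz: "u \<in> Sg \<Longrightarrow> u \<noteq> 0" by (auto simp: Sg_def)

lemma HypW_nn:
  assumes "HypW W" "nonneg u" "u \<noteq> 0"
  shows "\<exists>k. 0 < (W *v u)$k"
proof -
  define s where "s = (\<Sum>i\<in>UNIV. u$i)"
  have s: "0 < s" unfolding s_def by (rule sum_pos_nonneg[OF assms(2,3)])
  have "(1 / s) *\<^sub>R u \<in> Sg" unfolding s_def by (rule normalize_Sg[OF assms(2,3)])
  then obtain k where "0 < (W *v ((1 / s) *\<^sub>R u))$k" using assms(1) by (auto simp: HypW_def)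
  hence "0 < (1 / s) * (W *v u)$k" by (simp add: matrix_vector_mult_scaleR)
  hence "0 < (W *v u)$k" using s by (auto simp: zero_less_divide_iff)
  thus ?thesis by blast
qed

lemma inv_pos:
  fixes W :: "real^'m^'m"
  assumes H: "HypW W" and wz: "\<forall>j. 0 \<le> (W *v z)$j"
  shows "nonneg z"
proof (rule ccontr)
  assume nz: "\<not> nonneg z"
  define u where "u = (\<chi> j. max (- z$j) 0)"
  have unn: "nonneg u" by (simp add: u_def nonneg_def)
  obtain j0 where "z$j0 < 0" using nz by (auto simp: nonneg_def not_le)
  hence "u \<noteq> 0" by (auto simp: u_def vec_eq_iff intro!: exI[of _ j0])
  have off: "\<forall>i j. i \<noteq> j \<longrightarrow> W$i$j \<le> 0" using H by (simp add: HypW_def)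
  have "(W *v u)$k \<le> 0" for k
  proof (cases "z$k < 0")
    case True
    have "(W *v u)$k + (W *v z)$k = (\<Sum>j\<in>UNIV. W$k$j * (u$j + z$j))"
      by (simp add: mv_nth sum.distrib[symmetric] algebra_simps)
    also have "\<dots> \<le> 0"
    proof (rule sum_nonpos)
      fix j
      show "W$k$j * (u$j + z$j) \<le> 0"
      proof (cases "j = k")
        case True
        then show ?thesis using \<open>z$k < 0\<close> by (simp add: u_def)
      next
        case False
        then show ?thesis using off by (auto simp: u_def intro!: mult_nonpos_nonneg)
      qed
    qed
    finally show ?thesis using wz by (metis add_increasing2 le_less_trans less_le_not_le not_le)
  next
    case False
    have "(W *v u)$k = (\<Sum>j\<in>UNIV. W$k$j * u$j)" by (simp add: mv_nth)
    also have "\<dots> \<le> 0"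
    proof (rule sum_nonpos)
      fix j
      show "W$k$j * u$j \<le> 0"
      proof (cases "j = k")
        case True
        then show ?thesis using False by (simp add: u_def)
      next
        case False
        then show ?thesis using off by (auto simp: u_def intro!: mult_nonpos_nonneg)
      qed
    qed
    finally show ?thesis .
  qed
  thus False using HypW_nn[OF H unn \<open>u \<noteq> 0\<close>] by (meson not_le)
qed

lemma HypW_inv:
  fixes W :: "real^'m^'m"
  assumes H: "HypW W"
  shows "W ** matrix_inv W = mat 1" "matrix_inv W ** W = mat 1"
proof -
  have "inj ((*v) W)"
  proof (rule injI)
    fix x y assume "W *v x = W *v y"
    hence a: "W *v (x - y) = 0" "W *v (y - x) = 0" by (simp_all add: matrix_vector_mult_diff_distrib)
    have "nonneg (x - y)" "nonneg (y - x)" using inv_pos[OF H] a by auto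
    thus "x = y" by (auto simp: nonneg_def vec_eq_iff intro: order_antisym)
  qed
  hence "invertible W" using matrix_left_invertible_injective invertible_left_inverse by blast
  hence "\<exists>A'. W ** A' = mat 1 \<and> A' ** W = mat 1" by (simp add: invertible_def)
  hence "W ** matrix_inv W = mat 1 \<and> matrix_inv W ** W = mat 1"
    unfolding matrix_inv_def by (rule someI_ex)
  thus "W ** matrix_inv W = mat 1" "matrix_inv W ** W = mat 1" by auto
qed

lemma Winv_r: "HypW W \<Longrightarrow> W *v (matrix_inv W *v x) = x"
  by (simp add: matrix_vector_mul_assoc HypW_inv)
lemma Winv_l: "HypW W \<Longrightarrow> matrix_inv W *v (W *v x) = x"
  by (simp add: matrix_vector_mul_assoc HypW_inv)

lemma Winv_pos: "HypW W \<Longrightarrow> nonneg x \<Longrightarrow> nonneg (matrix_inv W *v x)"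
  by (rule inv_pos) (auto simp: Winv_r nonneg_def)

lemma Winv_mono: "HypW W \<Longrightarrow> \<forall>i. x$i \<le> y$i \<Longrightarrow> (matrix_inv W *v x)$k \<le> (matrix_inv W *v y)$k"
  using Winv_pos[of W "y - x"] by (auto simp: nonneg_def matrix_vector_mult_diff_distrib)

lemma HypW_diag: "HypW (W::real^'m^'m) \<Longrightarrow> 0 < W$k$k"
proof -
  assume H: "HypW W"
  have "nonneg (axis k (1::real))" "axis k (1::real) \<noteq> 0" by (auto simp: nonneg_def axis_def vec_eq_iff)
  then obtain i where "0 < (W *v axis k 1)$i" using HypW_nn[OF H] by blast
  hence "0 < W$i$k" by (simp add: mv_axis)
  moreover have "i \<noteq> k \<longrightarrow> W$i$k \<le> 0" using H by (simp add: HypW_def)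
  ultimately show ?thesis by force
qed

definition DW :: "real^'m^'m \<Rightarrow> real" where "DW W = (\<Sum>k\<in>UNIV. W$k$k)"

lemma DW_pos: "HypW W \<Longrightarrow> 0 < DW W"
proof -
  assume H: "HypW W"
  obtain k :: 'a where True by blast
  have "W$k$k \<le> DW W" unfolding DW_def using HypW_diag[OF H] by (intro member_le_sum) (auto intro: less_imp_le)
  thus ?thesis using HypW_diag[OF H, of k] by linarith
qed

lemma Winv_lb:
  fixes W :: "real^'m^'m"
  assumes H: "HypW W" and x: "nonneg x"
  shows "x$k / DW W \<le> (matrix_inv W *v x)$k"
proof -
  define y where "y = matrix_inv W *v x"
  have y: "nonneg y" unfolding y_def by (rule Winv_pos[OF H x])
  have Wy: "W *v y = x" unfolding y_def by (rule Winv_r[OF H])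
  have off: "\<forall>i j. i \<noteq> j \<longrightarrow> W$i$j \<le> 0" using H by (simp add: HypW_def)
  have "x$k = W$k$k * y$k + (\<Sum>j\<in>UNIV-{k}. W$k$j * y$j)"
    using Wy[symmetric] by (simp add: mv_nth sum.remove)
  moreover have "(\<Sum>j\<in>UNIV-{k}. W$k$j * y$j) \<le> 0"
    using off y by (intro sum_nonpos) (auto simp: nonneg_def intro: mult_nonpos_nonneg)
  moreover have "W$k$k \<le> DW W" unfolding DW_def using HypW_diag[OF H] by (intro member_le_sum) (auto intro: less_imp_le)
  moreover have "0 \<le> y$k" using y by (simp add: nonneg_def)
  ultimately have "x$k \<le> DW W * y$k"
    using mult_right_mono[of "W$k$k" "DW W" "y$k"] by linarith
  thus ?thesis using DW_pos[OF H] unfolding y_def by (simp add: divide_le_eq mult.commute)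
qed

definition Bpos :: "real^'m^'m \<Rightarrow> bool" where "Bpos B \<longleftrightarrow> (\<forall>i j. 0 \<le> B$i$j)"

lemma Bmono: "Bpos B \<Longrightarrow> \<forall>i. x$i \<le> y$i \<Longrightarrow> (B *v x)$k \<le> (B *v y)$k"
  unfolding Bpos_def mv_nth by (intro sum_mono mult_left_mono) auto

lemma Bnn: "Bpos B \<Longrightarrow> nonneg x \<Longrightarrow> nonneg (B *v x)"
  using Bmono[of B 0 x] by (auto simp: nonneg_def)

lemma norm_ineq:
  fixes M :: "real^'m^'m"
  assumes "nonneg x" "x \<noteq> 0" "\<forall>i. \<mu> * x$i \<le> (M *v x)$i"
  shows "\<exists>u\<in>Sg. \<forall>i. \<mu> * u$i \<le> (M *v u)$i"
proof -
  define s where "s = (\<Sum>i\<in>UNIV. x$i)"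
  have s: "0 < s" unfolding s_def by (rule sum_pos_nonneg[OF assms(1,2)])
  have "(1 / s) *\<^sub>R x \<in> Sg" unfolding s_def by (rule normalize_Sg[OF assms(1,2)])
  moreover have "\<mu> * ((1 / s) *\<^sub>R x)$i \<le> (M *v ((1 / s) *\<^sub>R x))$i" for i
  proof -
    have "(1/s) * (\<mu> * x$i) \<le> (1/s) * (M *v x)$i" using assms(3) s by (intro mult_left_mono) auto
    thus ?thesis by (simp add: matrix_vector_mult_scaleR algebra_simps)
  qed
  ultimately show ?thesis by blast
qed

lemma vmax: "\<exists>k. \<forall>j. (u::real^'m)$j \<le> u$k"
proof -
  have "Max (range (\<lambda>j. u$j)) \<in> range (\<lambda>j. u$j)" by (intro Max_in) auto
  then obtain k where k: "Max (range (\<lambda>j. u$j)) = u$k" by blast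
  have "u$j \<le> u$k" for j unfolding k[symmetric] by (intro Max_ge) auto
  thus ?thesis by blast
qed

lemma Apos:
  assumes "Bpos B" "HypW W" shows "Bpos (B ** matrix_inv W)"
proof -
  have "0 \<le> matrix_inv W $k$j" for k j
  proof -
    have "nonneg (axis j (1::real))" by (auto simp: nonneg_def axis_def)
    from Winv_pos[OF assms(2) this] have "0 \<le> (matrix_inv W *v axis j 1)$k" by (simp add: nonneg_def)
    thus ?thesis by (simp add: mv_axis)
  qed
  thus ?thesis using assms(1) unfolding Bpos_def matrix_matrix_mult_def
    by (auto intro!: sum_nonneg)
qed

lemma L1:
  fixes B W :: "real^'m^'m"
  assumes B: "Bpos B" and H: "HypW W" and u: "u \<in> Sg" and ineq: "\<forall>i. 0 \<le> ((B - W) *v u)$i"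
  shows "\<exists>x\<in>Sg. \<forall>i. 1 * x$i \<le> ((B ** matrix_inv W) *v x)$i"
proof -
  define x where "x = B *v u"
  have xn: "nonneg x" unfolding x_def using Bnn[OF B Sg_nonneg[OF u]] .
  have wu: "\<forall>i. (W *v u)$i \<le> x$i" using ineq by (simp add: x_def matrix_vector_mult_diff_rdistrib)
  have "x \<noteq> 0"
  proof
    assume "x = 0"
    then obtain k where "0 < (W *v u)$k" using H u by (auto simp: HypW_def)
    thus False using wu[rule_format, of k] \<open>x = 0\<close> by simp
  qed
  define y where "y = matrix_inv W *v x"
  have "(matrix_inv W *v (W *v u))$i \<le> y$i" for i unfolding y_def by (rule Winv_mono[OF H wu])
  hence uy: "\<forall>i. u$i \<le> y$i" by (simp add: Winv_l[OF H])
  have "1 * x$i \<le> ((B ** matrix_inv W) *v x)$i" for i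
  proof -
    have "(B *v u)$i \<le> (B *v y)$i" by (rule Bmono[OF B uy])
    thus ?thesis by (simp add: x_def y_def matrix_vector_mul_assoc[symmetric])
  qed
  thus ?thesis using norm_ineq[OF xn \<open>x \<noteq> 0\<close>] by blast
qed

lemma L2:
  fixes B W :: "real^'m^'m"
  assumes B: "Bpos B" and H: "HypW W" and x: "x \<in> Sg" and ineq: "\<forall>i. 1 * x$i \<le> ((B ** matrix_inv W) *v x)$i"
  shows "\<exists>u\<in>Sg. \<forall>i. 0 * u$i \<le> ((B - W) *v u)$i"
proof -
  define y where "y = matrix_inv W *v x"
  have yn: "nonneg y" unfolding y_def by (rule Winv_pos[OF H Sg_nonneg[OF x]])
  have Wy: "W *v y = x" unfolding y_def by (rule Winv_r[OF H])
  have "y \<noteq> 0" using Wy Sg_nz[OF x] by auto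
  moreover have "\<forall>i. 0 * y$i \<le> ((B - W) *v y)$i"
    using ineq by (simp add: matrix_vector_mult_diff_rdistrib Winv_r[OF H] y_def matrix_vector_mul_assoc[symmetric])
  ultimately show ?thesis using norm_ineq[OF yn] by blast
qed

lemma L3:
  fixes B W :: "real^'m^'m"
  assumes B: "Bpos B" and H: "HypW W" and u: "u \<in> Sg" and rho: "0 < \<rho>"
    and ineq: "\<forall>i. \<rho> * u$i \<le> ((B - W) *v u)$i"
  shows "\<exists>x\<in>Sg. \<exists>\<rho>'>1. \<forall>i. \<rho>' * x$i \<le> ((B ** matrix_inv W) *v x)$i"
proof -
  define x where "x = B *v u"
  have un: "nonneg u" using Sg_nonneg[OF u] .
  have xn: "nonneg x" unfolding x_def using Bnn[OF B un] .
  have wu: "\<forall>i. (W *v u + \<rho> *\<^sub>R u)$i \<le> x$i"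
  proof
    fix i
    have "\<rho> * u$i \<le> (B *v u)$i - (W *v u)$i" using ineq[rule_format, of i] by (simp add: matrix_vector_mult_diff_rdistrib)
    thus "(W *v u + \<rho> *\<^sub>R u)$i \<le> x$i" by (simp add: x_def)
  qed
  have "x \<noteq> 0"
  proof
    assume "x = 0"
    then obtain k where k: "0 < (W *v u)$k" using H u by (auto simp: HypW_def)
    have "(W *v u + \<rho> *\<^sub>R u)$k \<le> 0" using wu \<open>x = 0\<close> by simp
    hence "(W *v u)$k + \<rho> * u$k \<le> 0" by simp
    moreover have "0 \<le> \<rho> * u$k" using rho un by (simp add: nonneg_def)
    ultimately show False using k by linarith
  qed
  define y where "y = matrix_inv W *v x"
  define D where "D = DW W"
  have D: "0 < D" unfolding D_def by (rule DW_pos[OF H])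
  have "(matrix_inv W *v (W *v u + \<rho> *\<^sub>R u))$i \<le> y$i" for i unfolding y_def by (rule Winv_mono[OF H wu])
  hence a: "u$i + \<rho> * (matrix_inv W *v u)$i \<le> y$i" for i
    by (simp add: Winv_l[OF H] matrix_vector_right_distrib matrix_vector_mult_scaleR)
  have b: "u$i / D \<le> (matrix_inv W *v u)$i" for i unfolding D_def by (rule Winv_lb[OF H un])
  have uy: "\<forall>i. ((1 + \<rho> / D) *\<^sub>R u)$i \<le> y$i"
  proof
    fix i
    have "\<rho> * (u$i / D) \<le> \<rho> * (matrix_inv W *v u)$i" using b rho by (intro mult_left_mono) auto
    thus "((1 + \<rho> / D) *\<^sub>R u)$i \<le> y$i" using a[of i] by (simp add: algebra_simps)
  qed
  have "(1 + \<rho> / D) * x$i \<le> ((B ** matrix_inv W) *v x)$i" for i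
  proof -
    have "(B *v ((1 + \<rho> / D) *\<^sub>R u))$i \<le> (B *v y)$i" by (rule Bmono[OF B uy])
    thus ?thesis by (simp add: x_def y_def matrix_vector_mul_assoc[symmetric] matrix_vector_mult_scaleR)
  qed
  moreover have "1 < 1 + \<rho> / D" using rho D by simp
  ultimately show ?thesis using norm_ineq[OF xn \<open>x \<noteq> 0\<close>] by blast
qed

lemma scaleR_mat_mv: "(c *\<^sub>R mat 1) *v (u::real^'m) = c *\<^sub>R u"
proof -
  have "(c *\<^sub>R mat 1) *v u = c *\<^sub>R (mat 1 *v u)"
    by (simp add: vec_eq_iff matrix_vector_mult_def sum_distrib_left algebra_simps)
  thus ?thesis by simp
qed

lemma HypW_shift:
  assumes H: "HypW (W::real^'m^'m)" and mu: "0 \<le> \<mu>"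
  shows "HypW (W + \<mu> *\<^sub>R mat 1)"
  unfolding HypW_def
proof (intro conjI allI impI ballI)
  fix i j :: 'm assume "i \<noteq> j"
  thus "(W + \<mu> *\<^sub>R mat 1)$i$j \<le> 0" using H by (simp add: HypW_def mat_def)
next
  fix u :: "real^'m" assume u: "u \<in> Sg"
  then obtain k where k: "0 < (W *v u)$k" using H by (auto simp: HypW_def)
  have "0 \<le> \<mu> * u$k" using mu u by (simp add: Sg_def)
  hence "0 < ((W + \<mu> *\<^sub>R mat 1) *v u)$k" using k
    by (simp add: matrix_vector_mult_add_rdistrib scaleR_mat_mv)
  thus "\<exists>k. 0 < ((W + \<mu> *\<^sub>R mat 1) *v u)$k" by blast
qed

lemma L4:
  fixes B W :: "real^'m^'m"
  assumes B: "Bpos B" and H: "HypW W" and x: "x \<in> Sg" and rho: "1 < \<rho>"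
    and ineq: "\<forall>i. \<rho> * x$i \<le> ((B ** matrix_inv W) *v x)$i"
  shows "\<exists>u\<in>Sg. \<exists>\<rho>'>0. \<forall>i. \<rho>' * u$i \<le> ((B - W) *v u)$i"
proof -
  have xn: "nonneg x" using Sg_nonneg[OF x] .
  define y where "y = matrix_inv W *v x"
  have yn: "nonneg y" unfolding y_def by (rule Winv_pos[OF H xn])
  have Wy: "W *v y = x" unfolding y_def by (rule Winv_r[OF H])
  define z where "z = matrix_inv W *v y"
  have zn: "nonneg z" unfolding z_def by (rule Winv_pos[OF H yn])
  have Wz: "W *v z = y" unfolding z_def by (rule Winv_r[OF H])
  have Ax: "(B ** matrix_inv W) *v x = B *v y" by (simp add: y_def matrix_vector_mul_assoc[symmetric])
  have Bzn: "nonneg (B *v z)" by (rule Bnn[OF B zn])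
  define S where "S = (\<Sum>k\<in>UNIV. (B *v z)$k)"
  have S: "0 \<le> S" unfolding S_def using Bzn by (intro sum_nonneg) (auto simp: nonneg_def)
  have BzS: "(B *v z)$k \<le> S" for k unfolding S_def using Bzn by (intro member_le_sum) (auto simp: nonneg_def)
  define P where "P = (\<lambda>k. x$k) ` {k. 0 < x$k}"
  have Pf: "finite P" unfolding P_def by simp
  obtain k0 where "0 < x$k0" using Sg_pos[OF x] by blast
  hence Pne: "P \<noteq> {}" unfolding P_def by blast
  define m where "m = Min P"
  have "m \<in> P" unfolding m_def using Pf Pne by (rule Min_in)
  hence m: "0 < m" unfolding P_def by auto
  have mle: "m \<le> x$k" if "0 < x$k" for k unfolding m_def using Pf that by (intro Min_le) (auto simp: P_def)
  define \<mu> where "\<mu> = (\<rho> - 1) * m / (1 + S)"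
  have mu: "0 < \<mu>" unfolding \<mu>_def using rho m S by simp
  have muS: "\<mu> * S \<le> (\<rho> - 1) * m"
  proof -
    have "\<mu> * S = (\<rho> - 1) * m * (S / (1 + S))" unfolding \<mu>_def by simp
    also have "\<dots> \<le> (\<rho> - 1) * m * 1" using rho m S by (intro mult_left_mono) auto
    finally show ?thesis by simp
  qed
  define Wm where "Wm = W + \<mu> *\<^sub>R mat 1"
  have HWm: "HypW Wm" unfolding Wm_def by (rule HypW_shift[OF H]) (use mu in simp)
  define ym where "ym = matrix_inv Wm *v x"
  have ymn: "nonneg ym" unfolding ym_def by (rule Winv_pos[OF HWm xn])
  have "Wm *v ym = x" unfolding ym_def by (rule Winv_r[OF HWm])
  hence Wmy: "W *v ym + \<mu> *\<^sub>R ym = x" unfolding Wm_def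
    by (simp add: matrix_vector_mult_add_rdistrib scaleR_mat_mv)
  have d1: "nonneg (y - ym)"
  proof (rule inv_pos[OF H])
    have "W *v (y - ym) = \<mu> *\<^sub>R ym" using Wy Wmy by (simp add: matrix_vector_mult_diff_distrib algebra_simps)
    thus "\<forall>j. 0 \<le> (W *v (y - ym))$j" using ymn mu by (simp add: nonneg_def)
  qed
  have d2: "nonneg (\<mu> *\<^sub>R z - (y - ym))"
  proof (rule inv_pos[OF H])
    have "W *v (\<mu> *\<^sub>R z - (y - ym)) = \<mu> *\<^sub>R (y - ym)" using Wy Wmy Wz
      by (simp add: matrix_vector_mult_diff_distrib matrix_vector_mult_scaleR algebra_simps)
    thus "\<forall>j. 0 \<le> (W *v (\<mu> *\<^sub>R z - (y - ym)))$j" using d1 mu by (simp add: nonneg_def)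
  qed
  have le: "\<forall>i. (y - \<mu> *\<^sub>R z)$i \<le> ym$i"
  proof
    fix i
    have "y$i - ym$i \<le> \<mu> * z$i" using d2 by (simp add: nonneg_def)
    thus "(y - \<mu> *\<^sub>R z)$i \<le> ym$i" by simp
  qed
  have key: "x$k \<le> (B *v ym)$k" for k
  proof (cases "x$k = 0")
    case True
    then show ?thesis using Bnn[OF B ymn] by (simp add: nonneg_def)
  next
    case False
    hence xk: "0 < x$k" using xn by (simp add: nonneg_def less_le)
    have "(B *v (y - \<mu> *\<^sub>R z))$k \<le> (B *v ym)$k" by (rule Bmono[OF B le])
    hence "(B *v y)$k - \<mu> * (B *v z)$k \<le> (B *v ym)$k"
      by (simp add: matrix_vector_mult_diff_distrib matrix_vector_mult_scaleR)
    moreover have "\<rho> * x$k \<le> (B *v y)$k" using ineq Ax by metis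
    moreover have "\<mu> * (B *v z)$k \<le> \<mu> * S" using BzS mu by (intro mult_left_mono) auto
    moreover have "(\<rho> - 1) * m \<le> (\<rho> - 1) * x$k" using mle[OF xk] rho by (intro mult_left_mono) auto
    ultimately show ?thesis using muS by (simp add: algebra_simps)
  qed
  have "ym \<noteq> 0" using \<open>Wm *v ym = x\<close> Sg_nz[OF x] by auto
  moreover have "\<forall>i. \<mu> * ym$i \<le> ((B - W) *v ym)$i"
  proof
    fix i
    have "(W *v ym)$i + \<mu> * ym$i = x$i" using Wmy by (simp add: vec_eq_iff)
    thus "\<mu> * ym$i \<le> ((B - W) *v ym)$i" using key[of i] by (simp add: matrix_vector_mult_diff_rdistrib)
  qed
  ultimately show ?thesis using norm_ineq[OF ymn] mu by blast
qed

lemma axis_Sg: "axis k (1::real) \<in> Sg"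
  by (simp add: Sg_def axis_def)

lemma specrad:
  fixes A :: "real^'m^'m"
  assumes A: "Bpos A"
  shows "\<exists>r. spec_radius A = r \<and> r \<in> SS (\<lambda>_. A) \<and> (\<forall>\<mu>\<in>SS (\<lambda>_. A). \<mu> \<le> r) \<and> (\<exists>x\<in>Sg. A *v x = r *\<^sub>R x)"
proof -
  define b where "b = (\<Sum>k\<in>UNIV. \<Sum>j\<in>UNIV. A$k$j)"
  have cont: "continuous_on UNIV (\<lambda>\<mu>::real. (\<lambda>_. A) \<mu> $i$j)" for i j by simp
  have metz: "i \<noteq> j \<Longrightarrow> 0 \<le> (\<lambda>_. A) \<mu> $i$j" for \<mu> i j using A by (simp add: Bpos_def)
  have bdd: "\<mu> \<le> b" if mu: "\<mu> \<in> SS (\<lambda>_. A)" for \<mu>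
  proof -
    obtain u where u: "u \<in> Sg" "\<forall>i. \<mu> * u$i \<le> (A *v u)$i" using mu unfolding SS_def by blast
    obtain k where k: "\<forall>j. u$j \<le> u$k" using vmax by blast
    obtain j0 where "0 < u$j0" using Sg_pos[OF u(1)] by blast
    hence uk: "0 < u$k" using k by (meson less_le_trans)
    have "(A *v u)$k \<le> (\<Sum>j\<in>UNIV. A$k$j * u$k)" unfolding mv_nth
      using A k by (intro sum_mono mult_left_mono) (auto simp: Bpos_def)
    also have "\<dots> = (\<Sum>j\<in>UNIV. A$k$j) * u$k" by (simp add: sum_distrib_right)
    also have "\<dots> \<le> b * u$k"
    proof (rule mult_right_mono)
      show "(\<Sum>j\<in>UNIV. A$k$j) \<le> b" unfolding b_def
        using A by (intro member_le_sum[of k UNIV "\<lambda>k. \<Sum>j\<in>UNIV. A$k$j"]) (auto simp: Bpos_def intro!: sum_nonneg)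
      show "0 \<le> u$k" using uk by simp
    qed
    finally have "\<mu> * u$k \<le> b * u$k" using u(2) by (meson order_trans)
    thus ?thesis using uk by simp
  qed
  obtain k :: 'm where True by blast
  have ne: "0 \<in> SS (\<lambda>_. A)"
    unfolding SS_def using axis_Sg[of k] Bnn[OF A Sg_nonneg[OF axis_Sg[of k]]]
    by (auto simp: nonneg_def)
  obtain r where r: "r \<in> SS (\<lambda>_. A)" "\<forall>\<mu>\<in>SS (\<lambda>_. A). \<mu> \<le> r"
    using gen_max[of "\<lambda>_. A", OF cont bdd ne] by blast
  obtain x where x: "x \<in> Sg" "A *v x = r *\<^sub>R x"
    using gen_eig[of "\<lambda>_. A", OF metz cont r(1) r(2)] by auto
  have r0: "0 \<le> r" using r(2) ne by blast
  define Ac where "Ac = (\<chi> i j. complex_of_real (A$i$j))"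
  define E where "E = {cmod \<mu> | \<mu>. \<exists>v::complex^'m. v \<noteq> 0 \<and> Ac *v v = \<mu> *s v}"
  have "r \<in> E"
  proof -
    define v where "v = (\<chi> i. complex_of_real (x$i))"
    have "v \<noteq> 0" using Sg_nz[OF x(1)] by (auto simp: v_def vec_eq_iff)
    moreover have "Ac *v v = complex_of_real r *s v"
    proof -
      have "(Ac *v v)$i = complex_of_real ((A *v x)$i)" for i
        by (simp add: Ac_def v_def matrix_vector_mult_def)
      thus ?thesis using x(2) by (simp add: vec_eq_iff v_def)
    qed
    ultimately show ?thesis unfolding E_def using r0 by force
  qed
  moreover have "e \<le> r" if ee: "e \<in> E" for e
  proof -
    obtain \<mu> v where ev: "e = cmod \<mu>" "v \<noteq> 0" "Ac *v v = \<mu> *s v" using ee unfolding E_def by blast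
    define a where "a = (\<chi> j. cmod (v$j))"
    have an: "nonneg a" by (simp add: a_def nonneg_def)
    have "a \<noteq> 0" using ev(2) by (auto simp: a_def vec_eq_iff)
    moreover have "\<forall>i. cmod \<mu> * a$i \<le> (A *v a)$i"
    proof
      fix i
      have "cmod \<mu> * a$i = cmod ((Ac *v v)$i)" using ev(3) by (simp add: a_def norm_mult)
      also have "\<dots> = cmod (\<Sum>j\<in>UNIV. complex_of_real (A$i$j) * v$j)" by (simp add: Ac_def matrix_vector_mult_def)
      also have "\<dots> \<le> (\<Sum>j\<in>UNIV. cmod (complex_of_real (A$i$j) * v$j))" by (rule norm_sum)
      also have "\<dots> = (A *v a)$i" using A by (simp add: a_def mv_nth norm_mult Bpos_def)
      finally show "cmod \<mu> * a$i \<le> (A *v a)$i" .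
    qed
    ultimately have "cmod \<mu> \<in> SS (\<lambda>_. A)" using norm_ineq[OF an] unfolding SS_def by blast
    thus ?thesis using r(2) ev(1) by blast
  qed
  ultimately have "Sup E = r" by (intro cSup_eq_maximum)
  moreover have "spec_radius A = Sup E" unfolding spec_radius_def E_def Ac_def by simp
  ultimately show ?thesis using r x by auto
qed

definition Mt :: "((real \<Rightarrow> real^'m) \<Rightarrow> real^'m) \<Rightarrow> real \<Rightarrow> real^'m^'m" where
  "Mt L \<mu> = (\<chi> i j. L (\<lambda>\<theta>. exp (\<mu> * \<theta>) *\<^sub>R axis j 1) $ i)"

definition QM :: "real \<Rightarrow> ((real \<Rightarrow> real^'m) \<Rightarrow> real^'m) \<Rightarrow> bool" where
  "QM \<tau> L \<longleftrightarrow> (\<forall>i \<phi>. in_Cplus \<tau> \<phi> \<and> \<phi> 0 $ i = 0 \<longrightarrow> 0 \<le> L \<phi> $ i)"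

lemma in_C_UNIV: "continuous_on UNIV f \<Longrightarrow> in_C \<tau> f"
  unfolding in_C_def by (rule continuous_on_subset) auto

lemma bl_add: "bounded_linear_C \<tau> L \<Longrightarrow> in_C \<tau> f \<Longrightarrow> in_C \<tau> g \<Longrightarrow> L (\<lambda>\<theta>. f \<theta> + g \<theta>) = L f + L g"
  unfolding bounded_linear_C_def by blast

lemma bl_scale: "bounded_linear_C \<tau> L \<Longrightarrow> in_C \<tau> f \<Longrightarrow> L (\<lambda>\<theta>. c *\<^sub>R f \<theta>) = c *\<^sub>R L f"
  unfolding bounded_linear_C_def by blast

lemma in_C_add: "in_C \<tau> f \<Longrightarrow> in_C \<tau> g \<Longrightarrow> in_C \<tau> (\<lambda>\<theta>. f \<theta> + g \<theta>)"
  unfolding in_C_def by (intro continuous_intros)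
lemma in_C_scale: "in_C \<tau> f \<Longrightarrow> in_C \<tau> (\<lambda>\<theta>. c *\<^sub>R f \<theta>)"
  unfolding in_C_def by (intro continuous_intros)
lemma in_C_0: "in_C \<tau> (\<lambda>\<theta>. 0)"
  unfolding in_C_def by simp

lemma bl_zero: assumes "bounded_linear_C \<tau> L" shows "L (\<lambda>\<theta>. 0) = 0"
  using bl_scale[OF assms in_C_0, of 0] by simp

lemma bl_diff: "bounded_linear_C \<tau> L \<Longrightarrow> in_C \<tau> f \<Longrightarrow> in_C \<tau> g \<Longrightarrow> L (\<lambda>\<theta>. f \<theta> - g \<theta>) = L f - L g"
proof -
  assume bl: "bounded_linear_C \<tau> L" and f: "in_C \<tau> f" and g: "in_C \<tau> g"
  have "L (\<lambda>\<theta>. f \<theta> + (-1) *\<^sub>R g \<theta>) = L f + L (\<lambda>\<theta>. (-1) *\<^sub>R g \<theta>)"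
    by (rule bl_add[OF bl f in_C_scale[OF g]])
  also have "\<dots> = L f - L g" using bl_scale[OF bl g, of "-1"] by simp
  finally show ?thesis by simp
qed

lemma bl_sum:
  assumes bl: "bounded_linear_C \<tau> L" and fin: "finite S"
  shows "(\<forall>j\<in>S. in_C \<tau> (f j)) \<Longrightarrow> L (\<lambda>\<theta>. \<Sum>j\<in>S. f j \<theta>) = (\<Sum>j\<in>S. L (f j))"
  using fin
proof (induction S rule: finite_induct)
  case empty
  then show ?case using bl_zero[OF bl] by simp
next
  case (insert x F)
  have cF: "in_C \<tau> (\<lambda>\<theta>. \<Sum>j\<in>F. f j \<theta>)" using insert(4) unfolding in_C_def
    by (intro continuous_on_sum) auto
  have "L (\<lambda>\<theta>. \<Sum>j\<in>insert x F. f j \<theta>) = L (\<lambda>\<theta>. f x \<theta> + (\<Sum>j\<in>F. f j \<theta>))"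
    using insert(1,2) by simp
  also have "\<dots> = L (f x) + L (\<lambda>\<theta>. \<Sum>j\<in>F. f j \<theta>)"
    using bl_add[OF bl _ cF, of "f x"] insert(4) by simp
  also have "\<dots> = (\<Sum>j\<in>insert x F. L (f j))" using insert by simp
  finally show ?case .
qed

lemma bl_bound:
  fixes L :: "(real \<Rightarrow> real^'m) \<Rightarrow> real^'m"
  assumes bl: "bounded_linear_C \<tau> L" and tau: "0 \<le> \<tau>"
  shows "\<exists>K\<ge>0. \<forall>(\<phi>::real \<Rightarrow> real^'m) c. in_C \<tau> \<phi> \<longrightarrow> (\<forall>\<theta>\<in>{-\<tau>..0}. norm (\<phi> \<theta>) \<le> c) \<longrightarrow> norm (L \<phi>) \<le> K * c"
proof -
  obtain K0 where K0: "\<forall>\<phi>::real \<Rightarrow> real^'m. in_C \<tau> \<phi> \<longrightarrow> norm (L \<phi>) \<le> K0 * (SUP \<theta>\<in>{-\<tau>..0}. norm (\<phi> \<theta>))"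
    using bl unfolding bounded_linear_C_def by blast
  have "\<forall>(\<phi>::real \<Rightarrow> real^'m) c. in_C \<tau> \<phi> \<longrightarrow> (\<forall>\<theta>\<in>{-\<tau>..0}. norm (\<phi> \<theta>) \<le> c) \<longrightarrow> norm (L \<phi>) \<le> max K0 0 * c"
  proof (intro allI impI)
    fix \<phi> :: "real \<Rightarrow> real^'m" and c :: real assume phi: "in_C \<tau> \<phi>" and bd: "\<forall>\<theta>\<in>{-\<tau>..0}. norm (\<phi> \<theta>) \<le> c"
    have ne: "{-\<tau>..0} \<noteq> {}" using tau by simp
    have bda: "bdd_above ((\<lambda>\<theta>. norm (\<phi> \<theta>)) ` {-\<tau>..0})" using bd by (auto intro: bdd_aboveI2)
    have S: "(SUP \<theta>\<in>{-\<tau>..0}. norm (\<phi> \<theta>)) \<le> c" using bd ne by (intro cSUP_least) auto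
    have "norm (\<phi> 0) \<le> (SUP \<theta>\<in>{-\<tau>..0}. norm (\<phi> \<theta>))" using tau bda by (intro cSUP_upper) auto
    hence S0: "0 \<le> (SUP \<theta>\<in>{-\<tau>..0}. norm (\<phi> \<theta>))" by (meson norm_ge_zero order_trans)
    have "norm (L \<phi>) \<le> K0 * (SUP \<theta>\<in>{-\<tau>..0}. norm (\<phi> \<theta>))" using K0 phi by blast
    also have "\<dots> \<le> max K0 0 * (SUP \<theta>\<in>{-\<tau>..0}. norm (\<phi> \<theta>))" using S0 by (intro mult_right_mono) auto
    also have "\<dots> \<le> max K0 0 * c" using S by (intro mult_left_mono) auto
    finally show "norm (L \<phi>) \<le> max K0 0 * c" .
  qed
  thus ?thesis by (intro exI[of _ "max K0 0"]) auto
qed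

lemma in_C_expaxis: "in_C \<tau> (\<lambda>\<theta>. exp (\<mu> * \<theta>) *\<^sub>R (u::real^'m))"
  by (intro in_C_UNIV continuous_intros)

lemma Mt_mv:
  fixes L :: "(real \<Rightarrow> real^'m) \<Rightarrow> real^'m"
  assumes bl: "bounded_linear_C \<tau> L"
  shows "L (\<lambda>\<theta>. exp (\<mu> * \<theta>) *\<^sub>R u) = Mt L \<mu> *v u"
proof -
  have eq: "(\<lambda>\<theta>. exp (\<mu> * \<theta>) *\<^sub>R u) = (\<lambda>\<theta>. \<Sum>j\<in>UNIV. u$j *\<^sub>R (exp (\<mu> * \<theta>) *\<^sub>R axis j 1))"
  proof
    fix \<theta>
    have "(\<Sum>j\<in>UNIV. u$j *\<^sub>R (exp (\<mu> * \<theta>) *\<^sub>R axis j (1::real))) = exp (\<mu> * \<theta>) *\<^sub>R (\<Sum>j\<in>UNIV. u$j *\<^sub>R axis j 1)"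
      by (simp add: scaleR_sum_right ac_simps)
    also have "(\<Sum>j\<in>UNIV. u$j *\<^sub>R axis j (1::real)) = u"
      using basis_expansion[of u] by (simp add: scalar_mult_eq_scaleR)
    finally show "exp (\<mu> * \<theta>) *\<^sub>R u = (\<Sum>j\<in>UNIV. u$j *\<^sub>R (exp (\<mu> * \<theta>) *\<^sub>R axis j 1))" by simp
  qed
  have "L (\<lambda>\<theta>. exp (\<mu> * \<theta>) *\<^sub>R u) = (\<Sum>j\<in>UNIV. L (\<lambda>\<theta>. u$j *\<^sub>R (exp (\<mu> * \<theta>) *\<^sub>R axis j 1)))"
    unfolding eq by (rule bl_sum[OF bl]) (auto intro!: in_C_UNIV continuous_intros)
  also have "\<dots> = (\<Sum>j\<in>UNIV. u$j *\<^sub>R L (\<lambda>\<theta>. exp (\<mu> * \<theta>) *\<^sub>R axis j 1))"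
    by (intro sum.cong refl bl_scale[OF bl in_C_expaxis])
  also have "\<dots> = Mt L \<mu> *v u"
    by (simp add: vec_eq_iff Mt_def matrix_vector_mult_def mult.commute)
  finally show ?thesis .
qed

lemma exp_diff_le1: "(a::real) \<le> b \<Longrightarrow> \<bar>exp a - exp b\<bar> \<le> \<bar>a - b\<bar> * exp (\<bar>a\<bar> + \<bar>b\<bar>)"
proof -
  assume ab: "a \<le> b"
  have "1 + (a - b) \<le> exp (a - b)" by (rule exp_ge_add_one_self)
  hence "(1 + (a - b)) * exp b \<le> exp (a - b) * exp b" by (intro mult_right_mono) auto
  also have "exp (a - b) * exp b = exp a" by (simp add: exp_diff)
  finally have "exp b - exp a \<le> (b - a) * exp b" by (simp add: algebra_simps)
  moreover have "exp a \<le> exp b" using ab by simp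
  moreover have "(b - a) * exp b \<le> \<bar>a - b\<bar> * exp (\<bar>a\<bar> + \<bar>b\<bar>)"
    using ab by (intro mult_mono) auto
  ultimately show ?thesis by simp
qed

lemma exp_diff_le: "\<bar>exp a - exp b\<bar> \<le> \<bar>(a::real) - b\<bar> * exp (\<bar>a\<bar> + \<bar>b\<bar>)"
proof (cases "a \<le> b")
  case True then show ?thesis by (rule exp_diff_le1)
next
  case False
  hence "\<bar>exp b - exp a\<bar> \<le> \<bar>b - a\<bar> * exp (\<bar>b\<bar> + \<bar>a\<bar>)" by (intro exp_diff_le1) auto
  thus ?thesis by (simp add: abs_minus_commute add.commute)
qed

lemma Mt_metz:
  fixes L :: "(real \<Rightarrow> real^'m) \<Rightarrow> real^'m"
  assumes Q: "QM \<tau> L" and ij: "i \<noteq> j"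
  shows "0 \<le> Mt L \<mu> $i$j"
proof -
  have "in_Cplus \<tau> (\<lambda>\<theta>. exp (\<mu> * \<theta>) *\<^sub>R axis j (1::real))"
    unfolding in_Cplus_def using in_C_expaxis by (auto simp: axis_def)
  moreover have "(exp (\<mu> * 0) *\<^sub>R axis j (1::real)) $ i = 0" using ij by (simp add: axis_def)
  ultimately show ?thesis using Q unfolding QM_def Mt_def by simp
qed

lemma Mt_anti:
  fixes L :: "(real \<Rightarrow> real^'m) \<Rightarrow> real^'m"
  assumes bl: "bounded_linear_C \<tau> L" and Q: "QM \<tau> L" and mu: "\<mu> \<le> \<mu>'"
  shows "Mt L \<mu>' $i$j \<le> Mt L \<mu> $i$j"
proof -
  define \<phi> where "\<phi> = (\<lambda>\<theta>. exp (\<mu> * \<theta>) *\<^sub>R axis j (1::real) - exp (\<mu>' * \<theta>) *\<^sub>R axis j 1)"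
  have "in_C \<tau> \<phi>" unfolding \<phi>_def by (intro in_C_UNIV continuous_intros)
  moreover have "0 \<le> \<phi> \<theta> $ k" if "\<theta> \<in> {-\<tau>..0}" for \<theta> k
  proof -
    have "\<mu>' * \<theta> \<le> \<mu> * \<theta>" using that mu by (intro mult_right_mono_neg) auto
    hence "exp (\<mu>' * \<theta>) \<le> exp (\<mu> * \<theta>)" by simp
    thus ?thesis by (simp add: \<phi>_def axis_def)
  qed
  ultimately have "in_Cplus \<tau> \<phi>" by (simp add: in_Cplus_def)
  moreover have "\<phi> 0 $ i = 0" by (simp add: \<phi>_def)
  ultimately have "0 \<le> L \<phi> $ i" using Q unfolding QM_def by blast
  moreover have "L \<phi> = L (\<lambda>\<theta>. exp (\<mu> * \<theta>) *\<^sub>R axis j 1) - L (\<lambda>\<theta>. exp (\<mu>' * \<theta>) *\<^sub>R axis j 1)"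
    unfolding \<phi>_def by (rule bl_diff[OF bl in_C_expaxis in_C_expaxis])
  ultimately show ?thesis by (simp add: Mt_def)
qed

lemma Mt_cont:
  fixes L :: "(real \<Rightarrow> real^'m) \<Rightarrow> real^'m"
  assumes bl: "bounded_linear_C \<tau> L" and tau: "0 \<le> \<tau>"
  shows "continuous_on UNIV (\<lambda>\<mu>. Mt L \<mu> $i$j)"
proof -
  obtain K where K: "K \<ge> 0" "\<forall>(\<phi>::real \<Rightarrow> real^'m) c. in_C \<tau> \<phi> \<longrightarrow> (\<forall>\<theta>\<in>{-\<tau>..0}. norm (\<phi> \<theta>) \<le> c) \<longrightarrow> norm (L \<phi>) \<le> K * c"
    using bl_bound[OF bl tau] by blast
  have "isCont (\<lambda>\<mu>. Mt L \<mu> $i$j) \<mu>0" for \<mu>0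
  proof -
    define g where "g \<mu> = K * (\<bar>\<mu> - \<mu>0\<bar> * \<tau> * exp ((\<bar>\<mu>\<bar> + \<bar>\<mu>0\<bar>) * \<tau>))" for \<mu>
    have bound: "norm (Mt L \<mu> $i$j - Mt L \<mu>0 $i$j) \<le> g \<mu>" for \<mu>
    proof -
      define \<phi> where "\<phi> = (\<lambda>\<theta>. exp (\<mu> * \<theta>) *\<^sub>R axis j (1::real) - exp (\<mu>0 * \<theta>) *\<^sub>R axis j 1)"
      have phiC: "in_C \<tau> \<phi>" unfolding \<phi>_def by (intro in_C_UNIV continuous_intros)
      have Lphi: "L \<phi> = L (\<lambda>\<theta>. exp (\<mu> * \<theta>) *\<^sub>R axis j 1) - L (\<lambda>\<theta>. exp (\<mu>0 * \<theta>) *\<^sub>R axis j 1)"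
        unfolding \<phi>_def by (rule bl_diff[OF bl in_C_expaxis in_C_expaxis])
      have pb: "norm (\<phi> \<theta>) \<le> \<bar>\<mu> - \<mu>0\<bar> * \<tau> * exp ((\<bar>\<mu>\<bar> + \<bar>\<mu>0\<bar>) * \<tau>)" if th: "\<theta> \<in> {-\<tau>..0}" for \<theta>
      proof -
        have "norm (\<phi> \<theta>) = \<bar>exp (\<mu> * \<theta>) - exp (\<mu>0 * \<theta>)\<bar>"
          by (simp add: \<phi>_def scaleR_left_diff_distrib[symmetric])
        also have "\<dots> \<le> \<bar>\<mu> * \<theta> - \<mu>0 * \<theta>\<bar> * exp (\<bar>\<mu> * \<theta>\<bar> + \<bar>\<mu>0 * \<theta>\<bar>)" by (rule exp_diff_le)
        also have "\<dots> \<le> (\<bar>\<mu> - \<mu>0\<bar> * \<tau>) * exp ((\<bar>\<mu>\<bar> + \<bar>\<mu>0\<bar>) * \<tau>)"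
        proof (rule mult_mono)
          have "\<bar>\<theta>\<bar> \<le> \<tau>" using th by auto
          have "\<bar>\<mu> * \<theta> - \<mu>0 * \<theta>\<bar> = \<bar>\<mu> - \<mu>0\<bar> * \<bar>\<theta>\<bar>" by (simp add: abs_mult[symmetric] algebra_simps)
          thus "\<bar>\<mu> * \<theta> - \<mu>0 * \<theta>\<bar> \<le> \<bar>\<mu> - \<mu>0\<bar> * \<tau>" using \<open>\<bar>\<theta>\<bar> \<le> \<tau>\<close> by (simp add: mult_left_mono)
          have "\<bar>\<mu> * \<theta>\<bar> + \<bar>\<mu>0 * \<theta>\<bar> = (\<bar>\<mu>\<bar> + \<bar>\<mu>0\<bar>) * \<bar>\<theta>\<bar>" by (simp add: abs_mult algebra_simps)
          also have "\<dots> \<le> (\<bar>\<mu>\<bar> + \<bar>\<mu>0\<bar>) * \<tau>" using \<open>\<bar>\<theta>\<bar> \<le> \<tau>\<close> by (intro mult_left_mono) auto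
          finally show "exp (\<bar>\<mu> * \<theta>\<bar> + \<bar>\<mu>0 * \<theta>\<bar>) \<le> exp ((\<bar>\<mu>\<bar> + \<bar>\<mu>0\<bar>) * \<tau>)" by simp
        qed (use tau in auto)
        finally show ?thesis by simp
      qed
      have "norm (Mt L \<mu> $i$j - Mt L \<mu>0 $i$j) = \<bar>(L \<phi>) $ i\<bar>" by (simp add: Lphi Mt_def)
      also have "\<dots> \<le> norm (L \<phi>)" by (rule component_le_norm_cart)
      also have "\<dots> \<le> K * (\<bar>\<mu> - \<mu>0\<bar> * \<tau> * exp ((\<bar>\<mu>\<bar> + \<bar>\<mu>0\<bar>) * \<tau>))" using K(2) phiC pb by blast
      finally show ?thesis by (simp add: g_def)
    qed
    have "(g \<longlongrightarrow> g \<mu>0) (at \<mu>0)" unfolding g_def by (intro tendsto_intros)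
    hence "(g \<longlongrightarrow> 0) (at \<mu>0)" by (simp add: g_def)
    hence "((\<lambda>\<mu>. Mt L \<mu> $i$j - Mt L \<mu>0 $i$j) \<longlongrightarrow> 0) (at \<mu>0)"
      by (rule Lim_null_comparison[rotated]) (use bound in simp)
    thus ?thesis by (simp add: isCont_def LIM_zero_iff)
  qed
  thus ?thesis by (simp add: continuous_at_imp_continuous_on)
qed

lemma Mt_bdd:
  fixes L :: "(real \<Rightarrow> real^'m) \<Rightarrow> real^'m"
  assumes bl: "bounded_linear_C \<tau> L" and tau: "0 \<le> \<tau>"
  shows "\<exists>b. \<forall>\<mu>\<in>SS (Mt L). \<mu> \<le> b"
proof -
  obtain K where K: "K \<ge> 0" "\<forall>(\<phi>::real \<Rightarrow> real^'m) c. in_C \<tau> \<phi> \<longrightarrow> (\<forall>\<theta>\<in>{-\<tau>..0}. norm (\<phi> \<theta>) \<le> c) \<longrightarrow> norm (L \<phi>) \<le> K * c"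
    using bl_bound[OF bl tau] by blast
  have "\<mu> \<le> real CARD('m) * K" if mu: "\<mu> \<in> SS (Mt L)" for \<mu>
  proof (cases "\<mu> \<le> 0")
    case True
    then show ?thesis using K(1) by (meson of_nat_0_le_iff order_trans zero_le_mult_iff)
  next
    case False
    obtain u where u: "u \<in> Sg" "\<forall>i. \<mu> * u$i \<le> (Mt L \<mu> *v u)$i" using mu unfolding SS_def by blast
    obtain k where k: "\<forall>j. u$j \<le> u$k" using vmax by blast
    obtain j0 where "0 < u$j0" using Sg_pos[OF u(1)] by blast
    hence uk: "0 < u$k" using k by (meson less_le_trans)
    have ent: "\<bar>Mt L \<mu> $k$j\<bar> \<le> K" for j
    proof -
      have "\<forall>\<theta>\<in>{-\<tau>..0}. norm (exp (\<mu> * \<theta>) *\<^sub>R axis j (1::real)) \<le> 1"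
      proof
        fix \<theta> assume "\<theta> \<in> {-\<tau>..0}"
        hence "\<mu> * \<theta> \<le> 0" using False by (simp add: mult_nonneg_nonpos)
        thus "norm (exp (\<mu> * \<theta>) *\<^sub>R axis j (1::real)) \<le> 1" by simp
      qed
      hence "norm (L (\<lambda>\<theta>. exp (\<mu> * \<theta>) *\<^sub>R axis j 1)) \<le> K * 1" using K(2) in_C_expaxis by blast
      moreover have "\<bar>Mt L \<mu> $k$j\<bar> \<le> norm (L (\<lambda>\<theta>. exp (\<mu> * \<theta>) *\<^sub>R axis j 1))"
        unfolding Mt_def by (simp add: component_le_norm_cart)
      ultimately show ?thesis by simp
    qed
    have "\<mu> * u$k \<le> (\<Sum>j\<in>UNIV. Mt L \<mu> $k$j * u$j)" using u(2) by (simp add: mv_nth)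
    also have "\<dots> \<le> (\<Sum>j\<in>(UNIV::'m set). K * u$k)"
    proof (rule sum_mono)
      fix j
      have "Mt L \<mu> $k$j * u$j \<le> \<bar>Mt L \<mu> $k$j\<bar> * u$j" using u(1) by (intro mult_right_mono) (auto simp: Sg_def)
      also have "\<dots> \<le> K * u$k" using ent[of j] k u(1) K(1) by (intro mult_mono) (auto simp: Sg_def)
      finally show "Mt L \<mu> $k$j * u$j \<le> K * u$k" .
    qed
    also have "\<dots> = (real CARD('m) * K) * u$k" by simp
    finally show ?thesis using uk by simp
  qed
  thus ?thesis by blast
qed

lemma Mt_ne:
  fixes L :: "(real \<Rightarrow> real^'m) \<Rightarrow> real^'m"
  assumes bl: "bounded_linear_C \<tau> L" and Q: "QM \<tau> L"
  shows "\<exists>m0. m0 \<in> SS (Mt L)"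
proof -
  obtain k :: 'm where True by blast
  define m0 where "m0 = min 0 (Mt L 0 $k$k)"
  have "m0 * (axis k 1)$i \<le> (Mt L m0 *v axis k 1)$i" for i
  proof (cases "i = k")
    case True
    have a: "Mt L 0 $k$k \<le> Mt L m0 $k$k" by (rule Mt_anti[OF bl Q]) (simp add: m0_def)
    have b: "m0 \<le> Mt L 0 $k$k" by (simp add: m0_def)
    show ?thesis unfolding mv_axis using True a b by simp
  next
    case False
    show ?thesis unfolding mv_axis using Mt_metz[OF Q False] False by (simp add: axis_def)
  qed
  thus ?thesis using axis_Sg[of k] unfolding SS_def by blast
qed

lemma CT:
  fixes L :: "(real \<Rightarrow> real^'m) \<Rightarrow> real^'m"
  assumes bl: "bounded_linear_C \<tau> L" and Q: "QM \<tau> L" and tau: "0 \<le> \<tau>"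
  shows "\<exists>l0. l0 \<in> SS (Mt L) \<and> (\<forall>\<mu>\<in>SS (Mt L). \<mu> \<le> l0) \<and> (\<exists>u\<in>Sg. Mt L l0 *v u = l0 *\<^sub>R u)"
proof -
  have cont: "\<And>i j. continuous_on UNIV (\<lambda>\<mu>. Mt L \<mu> $i$j)" using Mt_cont[OF bl tau] .
  have metz: "\<And>\<mu> i j. i \<noteq> j \<Longrightarrow> 0 \<le> Mt L \<mu> $i$j" using Mt_metz[OF Q] .
  obtain b where b: "\<forall>\<mu>\<in>SS (Mt L). \<mu> \<le> b" using Mt_bdd[OF bl tau] by blast
  obtain m0 where m0: "m0 \<in> SS (Mt L)" using Mt_ne[OF bl Q] by blast
  obtain l0 where l0: "l0 \<in> SS (Mt L)" "\<forall>\<mu>\<in>SS (Mt L). \<mu> \<le> l0"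
    using gen_max[of "Mt L", OF cont _ m0] b by blast
  thus ?thesis using gen_eig[of "Mt L", OF metz cont l0(1) l0(2)] by blast
qed

lemma deriv_lemma:
  "((\<lambda>s. exp (z * of_real s) *s (v::complex^'m)) has_vector_derivative ((z * exp (z * of_real t)) *s v)) (at t)"
proof -
  have lin: "linear (\<lambda>c::complex. c *s v)"
    by (rule linearI) (simp_all add: vec_eq_iff algebra_simps mult_scaleR_left)
  have bl: "bounded_linear (\<lambda>c::complex. c *s v)" using lin by (simp add: linear_conv_bounded_linear)
  have "((\<lambda>w. exp (z * w)) has_field_derivative exp (z * of_real t) * z) (at (of_real t))"
    by (auto intro!: derivative_eq_intros)
  hence "((\<lambda>s. exp (z * of_real s)) has_vector_derivative exp (z * of_real t) * z) (at t)"
    by (rule has_vector_derivative_real_field)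
  from bounded_linear.has_vector_derivative[OF bl this]
  show ?thesis by (simp add: mult.commute)
qed

lemma E1:
  fixes L :: "(real \<Rightarrow> real^'m) \<Rightarrow> real^'m"
  assumes bl: "bounded_linear_C \<tau> L" and u: "u \<in> Sg" and eig: "Mt L l0 *v u = l0 *\<^sub>R u"
  shows "fde_eigenvalue L (complex_of_real l0)"
  unfolding fde_eigenvalue_def
proof (intro exI conjI allI)
  define v where "v = (\<chi> j. complex_of_real (u$j))"
  show "v \<noteq> 0" using Sg_nz[OF u] by (auto simp: v_def vec_eq_iff)
  fix t :: real
  have R: "(\<lambda>\<theta>. \<chi> j. Re ((exp (complex_of_real l0 * of_real (t + \<theta>)) *s v) $ j))
          = (\<lambda>\<theta>. exp (l0 * \<theta>) *\<^sub>R (exp (l0 * t) *\<^sub>R u))"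
  proof
    fix \<theta>
    have "exp (complex_of_real l0 * of_real (t + \<theta>)) = complex_of_real (exp (l0 * \<theta>) * exp (l0 * t))"
      by (simp add: exp_of_real[symmetric] exp_add[symmetric] algebra_simps)
    thus "(\<chi> j. Re ((exp (complex_of_real l0 * of_real (t + \<theta>)) *s v) $ j)) = exp (l0 * \<theta>) *\<^sub>R (exp (l0 * t) *\<^sub>R u)"
      by (simp add: vec_eq_iff v_def)
  qed
  have I: "(\<lambda>\<theta>. \<chi> j. Im ((exp (complex_of_real l0 * of_real (t + \<theta>)) *s v) $ j)) = (\<lambda>\<theta>. 0)"
  proof
    fix \<theta>
    have "exp (complex_of_real l0 * of_real (t + \<theta>)) = complex_of_real (exp (l0 * (t + \<theta>)))"
      by (simp add: exp_of_real[symmetric])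
    thus "(\<chi> j. Im ((exp (complex_of_real l0 * of_real (t + \<theta>)) *s v) $ j)) = 0"
      by (simp add: vec_eq_iff v_def)
  qed
  have LR: "L (\<lambda>\<theta>. exp (l0 * \<theta>) *\<^sub>R (exp (l0 * t) *\<^sub>R u)) = (exp (l0 * t) * l0) *\<^sub>R u"
    using Mt_mv[OF bl, of l0 "exp (l0 * t) *\<^sub>R u"] eig by (simp add: matrix_vector_mult_scaleR)
  have et: "exp (complex_of_real l0 * of_real t) = complex_of_real (exp (l0 * t))"
    by (simp add: exp_of_real[symmetric])
  have "cplx_app L (\<lambda>\<theta>. exp (complex_of_real l0 * of_real (t + \<theta>)) *s v)
        = (complex_of_real l0 * exp (complex_of_real l0 * of_real t)) *s v"
    unfolding cplx_app_def R I LR bl_zero[OF bl]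
    by (simp add: vec_eq_iff v_def complex_eq_iff et)
  thus "((\<lambda>s. exp (complex_of_real l0 * of_real s) *s v) has_vector_derivative
         cplx_app L (\<lambda>\<theta>. exp (complex_of_real l0 * of_real (t + \<theta>)) *s v)) (at t)"
    using deriv_lemma by metis
qed

lemma E2:
  fixes L :: "(real \<Rightarrow> real^'m) \<Rightarrow> real^'m"
  assumes bl: "bounded_linear_C \<tau> L" and Q: "QM \<tau> L" and ev: "fde_eigenvalue L z"
  shows "Re z \<in> SS (Mt L)"
proof -
  obtain v :: "complex^'m" where v: "v \<noteq> 0" and d: "\<forall>t::real. ((\<lambda>s. exp (z * of_real s) *s v) has_vector_derivative
         cplx_app L (\<lambda>\<theta>. exp (z * of_real (t + \<theta>)) *s v)) (at t)"
    using ev unfolding fde_eigenvalue_def by blast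
  define \<psi> where "\<psi> \<theta> = exp (z * of_real \<theta>) *s v" for \<theta> :: real
  have eq: "z *s v = cplx_app L \<psi>"
    using vector_derivative_unique_at[OF deriv_lemma[of z v 0] d[rule_format, of 0]] by (simp add: \<psi>_def[abs_def])
  define R where "R = (\<lambda>\<theta>. \<chi> j. Re (\<psi> \<theta> $ j))"
  define I where "I = (\<lambda>\<theta>. \<chi> j. Im (\<psi> \<theta> $ j))"
  have pn: "\<psi> \<theta> $ j = exp (z * of_real \<theta>) * v$j" for \<theta> j by (simp add: \<psi>_def)
  have cR: "in_C \<tau> R" unfolding R_def pn by (intro in_C_UNIV continuous_intros)
  have cI: "in_C \<tau> I" unfolding I_def pn by (intro in_C_UNIV continuous_intros)
  have comp: "z * v$k = Complex (L R $ k) (L I $ k)" for k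
  proof -
    have "(z *s v)$k = (cplx_app L \<psi>)$k" using eq by simp
    thus ?thesis by (simp add: cplx_app_def R_def I_def)
  qed
  define a where "a = (\<chi> j. cmod (v$j))"
  have an: "nonneg a" by (simp add: a_def nonneg_def)
  have anz: "a \<noteq> 0" using v by (auto simp: a_def vec_eq_iff)
  have absp: "(\<lambda>\<theta>. \<chi> j. cmod (\<psi> \<theta> $ j)) = (\<lambda>\<theta>. exp (Re z * \<theta>) *\<^sub>R a)"
    by (auto simp: \<psi>_def a_def vec_eq_iff norm_mult)
  have cA: "in_C \<tau> (\<lambda>\<theta>. \<chi> j. cmod (\<psi> \<theta> $ j))" unfolding absp by (rule in_C_expaxis)
  have Ma: "L (\<lambda>\<theta>. \<chi> j. cmod (\<psi> \<theta> $ j)) = Mt L (Re z) *v a" unfolding absp by (rule Mt_mv[OF bl])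
  have "\<forall>k. Re z * a$k \<le> (Mt L (Re z) *v a)$k"
  proof
    fix k
    show "Re z * a$k \<le> (Mt L (Re z) *v a)$k"
    proof (cases "v$k = 0")
      case True
      have "0 \<le> (Mt L (Re z) *v a)$k"
        by (rule metz_zero) (use Mt_metz[OF Q] an True in \<open>auto simp: nonneg_def a_def\<close>)
      thus ?thesis using True by (simp add: a_def)
    next
      case False
      have vk: "0 < cmod (v$k)" using False by simp
      define c where "c = cnj (v$k) / complex_of_real (cmod (v$k))"
      have c1: "cmod c = 1" using vk by (simp add: c_def norm_divide)
      have cv: "c * v$k = complex_of_real (cmod (v$k))"
      proof -
        have "cnj (v$k) * v$k = v$k * cnj (v$k)" by (simp add: mult.commute)
        also have "\<dots> = complex_of_real ((cmod (v$k))^2)" by (rule complex_norm_square[symmetric])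
        finally have "cnj (v$k) * v$k = complex_of_real ((cmod (v$k))^2)" .
        thus ?thesis using vk by (simp add: c_def power2_eq_square)
      qed
      have lhs: "Re (c * (z * v$k)) = Re z * cmod (v$k)"
      proof -
        have e: "c * (z * v$k) = z * complex_of_real (cmod (v$k))"
        proof -
          have "c * (z * v$k) = z * (c * v$k)" by (simp add: algebra_simps)
          thus ?thesis using cv by simp
        qed
        show ?thesis unfolding e by simp
      qed
      have Lcomb: "L (\<lambda>\<theta>. Re c *\<^sub>R R \<theta> - Im c *\<^sub>R I \<theta>) = Re c *\<^sub>R L R - Im c *\<^sub>R L I"
        using bl_diff[OF bl in_C_scale[OF cR] in_C_scale[OF cI]] bl_scale[OF bl cR] bl_scale[OF bl cI] by simp
      have rhs: "Re (c * (z * v$k)) = L (\<lambda>\<theta>. Re c *\<^sub>R R \<theta> - Im c *\<^sub>R I \<theta>) $ k"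
        unfolding Lcomb comp by simp
      define G where "G \<theta> = (\<chi> j. cmod (\<psi> \<theta> $ j)) - (Re c *\<^sub>R R \<theta> - Im c *\<^sub>R I \<theta>)" for \<theta>
      have cG: "in_C \<tau> G" unfolding G_def R_def I_def pn
        by (intro in_C_UNIV continuous_intros)
      have Gnn: "0 \<le> G \<theta> $ j" for \<theta> j
      proof -
        have "Re (c * \<psi> \<theta> $ j) \<le> cmod (c * \<psi> \<theta> $ j)" by (rule complex_Re_le_cmod)
        also have "\<dots> = cmod (\<psi> \<theta> $ j)" using c1 by (simp add: norm_mult)
        finally show ?thesis by (simp add: G_def R_def I_def)
      qed
      have "in_Cplus \<tau> G" using cG Gnn by (simp add: in_Cplus_def)
      moreover have "G 0 $ k = 0"
      proof -
        have "Re (c * v$k) = cmod (v$k)" using cv by simp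
        thus ?thesis by (simp add: G_def R_def I_def \<psi>_def)
      qed
      ultimately have "0 \<le> L G $ k" using Q unfolding QM_def by blast
      moreover have "L G = L (\<lambda>\<theta>. \<chi> j. cmod (\<psi> \<theta> $ j)) - L (\<lambda>\<theta>. Re c *\<^sub>R R \<theta> - Im c *\<^sub>R I \<theta>)"
        unfolding G_def by (rule bl_diff[OF bl cA]) (use cR cI in \<open>simp add: in_C_def continuous_intros\<close>)
      ultimately have "L (\<lambda>\<theta>. Re c *\<^sub>R R \<theta> - Im c *\<^sub>R I \<theta>) $ k \<le> (Mt L (Re z) *v a)$k"
        using Ma by simp
      thus ?thesis using lhs rhs by (simp add: a_def)
    qed
  qed
  from norm_ineq[OF an anz this] show ?thesis unfolding SS_def by blast
qed

lemma stab:
  fixes L :: "(real \<Rightarrow> real^'m) \<Rightarrow> real^'m"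
  assumes bl: "bounded_linear_C \<tau> L" and Q: "QM \<tau> L" and tau: "0 \<le> \<tau>"
  shows "\<exists>l0. stab_mod L = l0 \<and> l0 \<in> SS (Mt L) \<and> (\<forall>\<mu>\<in>SS (Mt L). \<mu> \<le> l0) \<and> (\<exists>u\<in>Sg. Mt L l0 *v u = l0 *\<^sub>R u)"
proof -
  obtain l0 u where l0: "l0 \<in> SS (Mt L)" "\<forall>\<mu>\<in>SS (Mt L). \<mu> \<le> l0" "u \<in> Sg" "Mt L l0 *v u = l0 *\<^sub>R u"
    using CT[OF bl Q tau] by blast
  have "Sup (Re ` {z. fde_eigenvalue L z}) = l0"
  proof (rule cSup_eq_maximum)
    have "fde_eigenvalue L (complex_of_real l0)" by (rule E1[OF bl l0(3,4)])
    thus "l0 \<in> Re ` {z. fde_eigenvalue L z}" by (metis Re_complex_of_real image_eqI mem_Collect_eq)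
    fix x assume "x \<in> Re ` {z. fde_eigenvalue L z}"
    then obtain z where "fde_eigenvalue L z" "x = Re z" by blast
    thus "x \<le> l0" using E2[OF bl Q] l0(2) by blast
  qed
  thus ?thesis using l0 unfolding stab_mod_def by blast
qed

lemma hatmat_Mt: "hatmat X = Mt X 0"
  by (simp add: hatmat_def matrix_def Mt_def)

lemma sgn_eq:
  fixes x y :: real
  assumes "x > 0 \<longleftrightarrow> y > 0" "x \<ge> 0 \<longleftrightarrow> y \<ge> 0"
  shows "sgn x = sgn y"
  using assms by (cases x "0::real" rule: linorder_cases) (auto simp: sgn_if)

theorem theorem2p2:
  fixes \<tau> :: real
    and F V :: "(real \<Rightarrow> real^'m) \<Rightarrow> real^'m"
  assumes tau: "\<tau> \<ge> 0"
    and F_bl: "bounded_linear_C \<tau> F"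
    and V_bl: "bounded_linear_C \<tau> V"
    and A1: "\<forall>\<phi>. in_Cplus \<tau> \<phi> \<longrightarrow> (\<forall>i. 0 \<le> F \<phi> $ i)"
    and A2_qm: "\<forall>i \<phi>. in_Cplus \<tau> \<phi> \<and> \<phi> 0 $ i = 0 \<longrightarrow> 0 \<le> - (V \<phi> $ i)"
    and A2_s: "stab_mod (\<lambda>\<phi>. - V \<phi>) < 0"
  shows "sgn (spec_radius (hatmat F ** matrix_inv (hatmat V)) - 1)
           = sgn (stab_mod (\<lambda>\<phi>. F \<phi> - V \<phi>))"
proof -
  define L where "L = (\<lambda>\<phi>. F \<phi> - V \<phi>)"
  define N where "N = (\<lambda>\<phi>. - V \<phi>)"
  have blL: "bounded_linear_C \<tau> L"
  proof -
    obtain K1 where K1: "\<forall>\<phi>. in_C \<tau> \<phi> \<longrightarrow> norm (F \<phi>) \<le> K1 * (SUP \<theta>\<in>{-\<tau>..0}. norm (\<phi> \<theta>))"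
      using F_bl unfolding bounded_linear_C_def by blast
    obtain K2 where K2: "\<forall>\<phi>. in_C \<tau> \<phi> \<longrightarrow> norm (V \<phi>) \<le> K2 * (SUP \<theta>\<in>{-\<tau>..0}. norm (\<phi> \<theta>))"
      using V_bl unfolding bounded_linear_C_def by blast
    have bound: "\<forall>\<phi>. in_C \<tau> \<phi> \<longrightarrow> norm (L \<phi>) \<le> (K1 + K2) * (SUP \<theta>\<in>{-\<tau>..0}. norm (\<phi> \<theta>))"
    proof (intro allI impI)
      fix \<phi> :: "real \<Rightarrow> real^'m" assume "in_C \<tau> \<phi>"
      hence "norm (F \<phi>) + norm (V \<phi>) \<le> (K1 + K2) * (SUP \<theta>\<in>{-\<tau>..0}. norm (\<phi> \<theta>))"
        using K1 K2 by (simp add: distrib_right add_mono)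
      moreover have "norm (L \<phi>) \<le> norm (F \<phi>) + norm (V \<phi>)" unfolding L_def by (rule norm_triangle_ineq4)
      ultimately show "norm (L \<phi>) \<le> (K1 + K2) * (SUP \<theta>\<in>{-\<tau>..0}. norm (\<phi> \<theta>))" by linarith
    qed
    have add: "\<forall>\<phi> \<psi>. in_C \<tau> \<phi> \<longrightarrow> in_C \<tau> \<psi> \<longrightarrow> L (\<lambda>\<theta>. \<phi> \<theta> + \<psi> \<theta>) = L \<phi> + L \<psi>"
      using F_bl V_bl unfolding bounded_linear_C_def L_def by (simp add: algebra_simps)
    have sc: "\<forall>c \<phi>. in_C \<tau> \<phi> \<longrightarrow> L (\<lambda>\<theta>. c *\<^sub>R \<phi> \<theta>) = c *\<^sub>R L \<phi>"
      using F_bl V_bl unfolding bounded_linear_C_def L_def by (simp add: scaleR_diff_right)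
    show ?thesis unfolding bounded_linear_C_def using add sc bound by blast
  qed
  have blN: "bounded_linear_C \<tau> N"
    using V_bl unfolding bounded_linear_C_def N_def by auto
  have QL: "QM \<tau> L" unfolding QM_def L_def
  proof (intro allI impI)
    fix i :: 'm and \<phi> :: "real \<Rightarrow> real^'m" assume h: "in_Cplus \<tau> \<phi> \<and> \<phi> 0 $ i = 0"
    have "0 \<le> F \<phi> $ i" using A1 h by blast
    moreover have "0 \<le> - (V \<phi> $ i)" using A2_qm h by blast
    ultimately show "0 \<le> (F \<phi> - V \<phi>) $ i" by simp
  qed
  have QN: "QM \<tau> N" unfolding QM_def N_def using A2_qm by simp
  define B where "B = hatmat F"
  define W where "W = hatmat V"
  have ML0: "Mt L 0 = B - W" by (simp add: B_def W_def hatmat_Mt Mt_def L_def vec_eq_iff)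
  have MN0: "Mt N 0 = - W" by (simp add: W_def hatmat_Mt Mt_def N_def vec_eq_iff)
  have Bp: "Bpos B" unfolding Bpos_def B_def hatmat_Mt Mt_def
  proof (intro allI)
    fix i j :: 'm
    have "in_Cplus \<tau> (\<lambda>\<theta>. exp (0 * \<theta>) *\<^sub>R axis j (1::real))"
      unfolding in_Cplus_def by (auto simp: in_C_def axis_def)
    thus "0 \<le> (\<chi> i j. F (\<lambda>\<theta>. exp (0 * \<theta>) *\<^sub>R axis j 1) $ i) $ i $ j" using A1 by simp
  qed
  obtain lN where lN: "stab_mod N = lN" "lN \<in> SS (Mt N)" "\<forall>\<mu>\<in>SS (Mt N). \<mu> \<le> lN"
    using stab[OF blN QN tau] by blast
  have lNneg: "lN < 0" using A2_s lN(1) by (simp add: N_def)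
  have HW: "HypW W" unfolding HypW_def
  proof (intro conjI allI impI ballI)
    fix i j :: 'm assume "i \<noteq> j"
    from Mt_metz[OF QN this, of 0] show "W$i$j \<le> 0" by (simp add: MN0)
  next
    fix u :: "real^'m" assume u: "u \<in> Sg"
    show "\<exists>k. 0 < (W *v u)$k"
    proof (rule ccontr)
      assume "\<not> ?thesis"
      hence "\<forall>i. 0 * u$i \<le> (Mt N 0 *v u)$i" by (simp add: MN0 mv_nth sum_negf not_less)
      hence "0 \<in> SS (Mt N)" using u unfolding SS_def by blast
      thus False using lN(3) lNneg by force
    qed
  qed
  define A where "A = B ** matrix_inv W"
  have Ap: "Bpos A" unfolding A_def by (rule Apos[OF Bp HW])
  obtain r where r: "spec_radius A = r" "r \<in> SS (\<lambda>_. A)" "\<forall>\<mu>\<in>SS (\<lambda>_. A). \<mu> \<le> r" "\<exists>x\<in>Sg. A *v x = r *\<^sub>R x"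
    using specrad[OF Ap] by blast
  obtain l where l: "stab_mod L = l" "l \<in> SS (Mt L)" "\<forall>\<mu>\<in>SS (Mt L). \<mu> \<le> l" "\<exists>u\<in>Sg. Mt L l *v u = l *\<^sub>R u"
    using stab[OF blL QL tau] by blast
  have antiL: "\<And>\<mu> \<mu>' i j. \<mu> \<le> \<mu>' \<Longrightarrow> Mt L \<mu>' $i$j \<le> Mt L \<mu> $i$j" using Mt_anti[OF blL QL] .
  have antiA: "\<And>\<mu> \<mu>' i j. \<mu> \<le> \<mu>' \<Longrightarrow> (\<lambda>_. A) \<mu>' $i$j \<le> (\<lambda>_. A) \<mu> $i$j" by simp
  have e1: "0 \<le> l \<longleftrightarrow> 1 \<le> r"
  proof
    assume "0 \<le> l"
    hence "0 \<in> SS (Mt L)" using SS_down[OF antiL l(2)] by blast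
    then obtain u where "u \<in> Sg" "\<forall>i. 0 \<le> ((B - W) *v u)$i" by (auto simp: SS_def ML0)
    from L1[OF Bp HW this] have "1 \<in> SS (\<lambda>_. A)" unfolding SS_def A_def by blast
    thus "1 \<le> r" using r(3) by blast
  next
    assume "1 \<le> r"
    hence "1 \<in> SS (\<lambda>_. A)" using SS_down[OF antiA r(2)] by blast
    then obtain x where "x \<in> Sg" "\<forall>i. 1 * x$i \<le> ((B ** matrix_inv W) *v x)$i" unfolding SS_def A_def by blast
    from L2[OF Bp HW this] have "0 \<in> SS (Mt L)" by (simp add: SS_def ML0)
    thus "0 \<le> l" using l(3) by blast
  qed
  have e2: "0 < l \<longleftrightarrow> 1 < r"
  proof
    assume lp: "0 < l"
    obtain u where u: "u \<in> Sg" "Mt L l *v u = l *\<^sub>R u" using l(4) by blast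
    have "\<forall>i. l * u$i \<le> ((B - W) *v u)$i"
    proof
      fix i
      have "(Mt L l *v u)$i \<le> (Mt L 0 *v u)$i"
        by (rule mv_mono) (use antiL lp Sg_nonneg[OF u(1)] in \<open>auto simp: nonneg_def\<close>)
      thus "l * u$i \<le> ((B - W) *v u)$i" using u(2) by (simp add: ML0)
    qed
    from L3[OF Bp HW u(1) lp this] obtain x \<rho>' where "x \<in> Sg" "1 < \<rho>'" "\<forall>i. \<rho>' * x$i \<le> (A *v x)$i"
      unfolding A_def by blast
    hence "\<rho>' \<in> SS (\<lambda>_. A)" "1 < \<rho>'" unfolding SS_def by blast+
    thus "1 < r" using r(3) by force
  next
    assume rp: "1 < r"
    obtain x where x: "x \<in> Sg" "A *v x = r *\<^sub>R x" using r(4) by blast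
    have "\<forall>i. r * x$i \<le> ((B ** matrix_inv W) *v x)$i" using x(2) by (simp add: A_def)
    from L4[OF Bp HW x(1) rp this] obtain u \<rho>' where u: "u \<in> Sg" "0 < \<rho>'" "\<forall>i. \<rho>' * u$i \<le> (Mt L 0 *v u)$i"
      unfolding ML0 by blast
    from bump[of "Mt L", OF Mt_metz[OF QL] Mt_cont[OF blL tau] u(1) u(3) u(2)]
    obtain \<mu> where "0 < \<mu>" "\<mu> \<in> SS (Mt L)" by blast
    thus "0 < l" using l(3) by force
  qed
  have "sgn (r - 1) = sgn l" by (rule sgn_eq) (use e1 e2 in auto)
  thus ?thesis using r(1) l(1) by (simp add: A_def B_def W_def L_def)
qed

end
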